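(* Every binary subspace chirp is a stabilizer state. Conversely, every stabilizer state in $\mathbb C^{2^m}$ equals $\lambda\mathbf w$ for some binary subspace chirp $\mathbf w$ and some $\lambda\in\mathbb C$ with $|\lambda|=1$.
   Context: Fix $m\ge1$, $N=2^m$. Binary vectors are columns over $\mathbb F_2$; $\mathrm{Sym}(r;2)$ is the set of symmetric binary $r\times r$ matrices, $\mathcal G(m,r;2)$ the set of $r$-dimensional subspaces of $\mathbb F_2^m$. The standard basis of $\mathbb C^N=(\mathbb C^2)^{\otimes m}$ is $\{\mathbf e_{\mathbf v}=\mathbf e_{v_1}\otimes\cdots\otimes\mathbf e_{v_m}:\mathbf v\in\mathbb F_2^m\}$ and vectors of $\mathbb C^N$ are indexed by $\mathbb F_2^m$. Whenever a binary expression appears in an exponent of $i$, binary entries are lifted to the integers $0,1$ and the expression is evaluated in $\mathbb Z$ (equivalently mod 4). Pauli matrices: $\sigma_x=\begin{pmatrix}0&1\\1&0\end{pmatrix}$, $\sigma_z=\begin{pmatrix}1&0\\0&-1\end{pmatrix}$; for $\mathbf a,\mathbf b\in\mathbb F_2^m$, $\mathbf D(\mathbf a,\mathbf b)=\sigma_x^{a_1}\sigma_z^{b_1}\otimes\cdots\otimes\sigma_x^{a_m}\sigma_z^{b_m}$. The Heisenberg–Weyl group is $\mathcal{HW}_N=\{i^k\mathbf D(\mathbf a,\mathbf b):\mathbf a,\mathbf b\in\mathbb F_2^m,k\in\{0,1,2,3\}\}$. A stabilizer group is a commutative subgroup $\mathcal S\subseteq\mathcal{HW}_N$ with $-\mathbf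 I_N\notin\mathcal S$; it is maximal if $|\mathcal S|=2^m$. For a maximal stabilizer group $\mathcal S$, the space $V(\mathcal S)=\{\mathbf v\in\mathbb C^N:\mathbf E\mathbf v=\mathbf v\ \forall\mathbf E\in\mathcal S\}$ is one-dimensional, and a unit vector spanning it is called a stabilizer state. Echelon data: for $0\le r\le m$ and $H\in\mathcal G(m,r;2)$, let $\mathbf H_{\mathcal I}$ be the unique $m\times r$ binary matrix in column reduced echelon form with column space $H$: there are indices $i_1<\dots<i_r$, $\mathcal I=\{i_1,\dots,i_r\}$, such that rows $i_1,\dots,i_r$ of $\mathbf H_{\mathcal I}$ form $\mathbf I_r$ and column $j$ of $\mathbf H_{\mathcal I}$ is zero in all rows above row $i_j$. Let $\mathbf I_{\tilde{\mathcal I}}$ be the $m\times(m-r)$ matrix whose columns are the standard basis vectors $\mathbf e_i$ with $i\notin\mathcal I$, in increasing order of $i$, and put $\mathbf P_{\mathcal I}=[\mathbf H_{\mathcal I}\ \ \mathbf I_{\tilde{\mathcal I}}]\in\mathrm{GL}(m;2)$. (For $r=0$: $H=\{0\}$, $\mathbf P_{\mathcal I}=\mathbf I_m$.) For $\mathbf S_r\in\mathrm{Sym}(r;2)$, $\tilde{\mathbf S}_r\in\mathrm{Sym}(m;2)$ denotes the matrix with $\mathbf S_r$ as its upper-left $r\times r$ block and zeros elsewhere. Binary subspace chirps: let $f(\mathbf v,\mathbf w,r)=\prod_{i=r+1}^m(1+v_i+w_i)$ computed in $\mathbb F_2$ and viewed in $\{0,1\}$. For $\mathbf b\in\mathbb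 F_2^m$, the binary subspace chirp (BSSC) $\mathbf w_{\mathbf b}=\mathbf w^{H,\mathbf S_r}_{\mathbf b}\in\mathbb C^N$ has entries $\mathbf w_{\mathbf b}(\mathbf a)=2^{-r/2}\,i^{\mathbf u^T\tilde{\mathbf S}_r\mathbf u+2\mathbf b^T\mathbf u}\,f(\mathbf b,\mathbf u,r)$ with $\mathbf u=\mathbf P_{\mathcal I}^{-1}\mathbf a\in\mathbb F_2^m$, for $\mathbf a\in\mathbb F_2^m$. The integer $r$ is its rank. *)

theory Defs
  imports Complex_Main
begin

text \<open>Binary vectors in F_2^m are boolean lists of length m (index 0 .. m-1,
  i.e. coordinate i of the paper is list position i-1).  A vector of C^N, N = 2^m,
  is a function from boolean lists to complex numbers that vanishes off F_2^m.
  Matrices N x N are functions of two binary vectors, vanishing off F_2^m x F_2^m.\<close>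

definition bvecs :: "nat \<Rightarrow> bool list set" where
  "bvecs m = {v. length v = m}"

definition cvecs :: "nat \<Rightarrow> (bool list \<Rightarrow> complex) set" where
  "cvecs m = {\<psi>. \<forall>a. length a \<noteq> m \<longrightarrow> \<psi> a = 0}"

definition cnorm2 :: "nat \<Rightarrow> (bool list \<Rightarrow> complex) \<Rightarrow> real" where
  "cnorm2 m \<psi> = (\<Sum>a\<in>bvecs m. (cmod (\<psi> a))\<^sup>2)"

type_synonym cmat = "bool list \<Rightarrow> bool list \<Rightarrow> complex"

definition mmul :: "nat \<Rightarrow> cmat \<Rightarrow> cmat \<Rightarrow> cmat" where
  "mmul m A B = (\<lambda>u v. \<Sum>w\<in>bvecs m. A u w * B w v)"

definition mapply :: "nat \<Rightarrow> cmat \<Rightarrow> (bool list \<Rightarrow> complex) \<Rightarrow> (bool list \<Rightarrow> complex)" where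
  "mapply m A \<psi> = (\<lambda>u. \<Sum>v\<in>bvecs m. A u v * \<psi> v)"

definition mid :: "nat \<Rightarrow> cmat" where
  "mid m = (\<lambda>u v. if length u = m \<and> length v = m \<and> u = v then 1 else 0)"

definition bxor :: "bool list \<Rightarrow> bool list \<Rightarrow> bool list" where
  "bxor x y = map2 (\<lambda>p q. p \<noteq> q) x y"

text \<open>D(a,b) = sigma_x^a1 sigma_z^b1 (x) ... (x) sigma_x^am sigma_z^bm; its (u,v) entry
  is [u = v + a] (-1)^(b^T v).\<close>

definition Dmat :: "nat \<Rightarrow> bool list \<Rightarrow> bool list \<Rightarrow> cmat" where
  "Dmat m a b = (\<lambda>u v. if length u = m \<and> length v = m \<and> u = bxor v a
       then (-1::complex) ^ (\<Sum>i<m. of_bool (b ! i \<and> v ! i)) else 0)"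

definition HW :: "nat \<Rightarrow> cmat set" where
  "HW m = {E. \<exists>a b k. a \<in> bvecs m \<and> b \<in> bvecs m \<and> k < (4::nat) \<and>
              E = (\<lambda>u v. \<i> ^ k * Dmat m a b u v)}"

definition stabilizer_group :: "nat \<Rightarrow> cmat set \<Rightarrow> bool" where
  "stabilizer_group m S \<longleftrightarrow>
     S \<subseteq> HW m \<and> mid m \<in> S \<and>
     (\<forall>E\<in>S. \<forall>F\<in>S. mmul m E F \<in> S) \<and>
     (\<forall>E\<in>S. \<exists>F\<in>S. mmul m E F = mid m \<and> mmul m F E = mid m) \<and>
     (\<forall>E\<in>S. \<forall>F\<in>S. mmul m E F = mmul m F E) \<and>
     (\<lambda>u v. - mid m u v) \<notin> S"

definition maximal_stabilizer_group :: "nat \<Rightarrow> cmat set \<Rightarrow> bool" where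
  "maximal_stabilizer_group m S \<longleftrightarrow> stabilizer_group m S \<and> card S = 2 ^ m"

definition fixed_space :: "nat \<Rightarrow> cmat set \<Rightarrow> (bool list \<Rightarrow> complex) set" where
  "fixed_space m S = {\<psi> \<in> cvecs m. \<forall>E\<in>S. mapply m E \<psi> = \<psi>}"

definition stabilizer_state :: "nat \<Rightarrow> (bool list \<Rightarrow> complex) \<Rightarrow> bool" where
  "stabilizer_state m \<psi> \<longleftrightarrow>
     (\<exists>S. maximal_stabilizer_group m S \<and> \<psi> \<in> cvecs m \<and> cnorm2 m \<psi> = 1 \<and>
          fixed_space m S = {(\<lambda>a. c * \<psi> a) | c. True})"

text \<open>An m x r binary matrix H (entries H i j, i < m, j < r; other entries irrelevant)
  in column reduced echelon form with pivot list piv = [i_1, ..., i_r] (0-based,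
  strictly increasing).  Such matrices are exactly the matrices H_I for H in G(m,r;2).\<close>

definition is_cref :: "nat \<Rightarrow> nat \<Rightarrow> (nat \<Rightarrow> nat \<Rightarrow> bool) \<Rightarrow> nat list \<Rightarrow> bool" where
  "is_cref m r H piv \<longleftrightarrow>
     length piv = r \<and> sorted_wrt (<) piv \<and> (\<forall>j<r. piv ! j < m) \<and>
     (\<forall>j<r. \<forall>k<r. H (piv ! j) k = (j = k)) \<and>
     (\<forall>j<r. \<forall>i<piv ! j. \<not> H i j)"

definition nonpiv :: "nat \<Rightarrow> nat list \<Rightarrow> nat list" where
  "nonpiv m piv = filter (\<lambda>i. i \<notin> set piv) [0..<m]"

text \<open>P_I u for P_I = [H_I  I_~I]: coordinate i is the F_2-sum of
  H i j u_j (j < r) and of u_(r+k) where nonpiv!k = i.\<close>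

definition Pmul :: "nat \<Rightarrow> nat \<Rightarrow> (nat \<Rightarrow> nat \<Rightarrow> bool) \<Rightarrow> nat list \<Rightarrow> bool list \<Rightarrow> bool list" where
  "Pmul m r H piv u = map (\<lambda>i. odd (card {j. j < r \<and> H i j \<and> u ! j}
                                  + card {k. k < m - r \<and> nonpiv m piv ! k = i \<and> u ! (r + k)})) [0..<m]"

definition Pinv :: "nat \<Rightarrow> nat \<Rightarrow> (nat \<Rightarrow> nat \<Rightarrow> bool) \<Rightarrow> nat list \<Rightarrow> bool list \<Rightarrow> bool list" where
  "Pinv m r H piv a = (THE u. length u = m \<and> Pmul m r H piv u = a)"

text \<open>f(v,w,r) = prod_{i=r+1}^m (1 + v_i + w_i) in F_2 (0-based: i = r .. m-1).\<close>

definition ffun :: "nat \<Rightarrow> bool list \<Rightarrow> bool list \<Rightarrow> nat \<Rightarrow> int" where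
  "ffun m v w r = (\<Prod>i\<in>{r..<m}. (1 + of_bool (v ! i) + of_bool (w ! i)) mod 2)"

definition sym_bin :: "nat \<Rightarrow> (nat \<Rightarrow> nat \<Rightarrow> bool) \<Rightarrow> bool" where
  "sym_bin r S \<longleftrightarrow> (\<forall>j<r. \<forall>k<r. S j k = S k j)"

text \<open>The binary subspace chirp w_b^{H,S_r}.  The exponent u^T S~ u + 2 b^T u is
  evaluated in Z with binary entries lifted to 0,1.\<close>

definition bssc :: "nat \<Rightarrow> nat \<Rightarrow> (nat \<Rightarrow> nat \<Rightarrow> bool) \<Rightarrow> nat list \<Rightarrow> (nat \<Rightarrow> nat \<Rightarrow> bool)
                     \<Rightarrow> bool list \<Rightarrow> bool list \<Rightarrow> complex" where
  "bssc m r H piv S b a =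
     (if length a = m then
        (let u = Pinv m r H piv a;
             e = (\<Sum>j<r. \<Sum>k<r. of_bool (u ! j) * of_bool (S j k) * of_bool (u ! k))
                 + 2 * (\<Sum>i<m. of_bool (b ! i) * of_bool (u ! i)) :: nat
         in complex_of_real (1 / sqrt (2 ^ r)) * \<i> ^ e * of_int (ffun m b u r))
      else 0)"

end

theory Submission
  imports Defs
begin

lemma bvecs_finite[simp]: "finite (bvecs m)"
  unfolding bvecs_def using finite_lists_length_eq[of "UNIV::bool set" m] by simp

lemma bvecs_card: "card (bvecs m) = 2 ^ m"
  unfolding bvecs_def using card_lists_length_eq[of "UNIV::bool set" m] by simp

lemma in_bvecs[simp]: "v \<in> bvecs m \<longleftrightarrow> length v = m"
  by (simp add: bvecs_def)

lemma bxor_length[simp]: "length (bxor x y) = min (length x) (length y)"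
  by (simp add: bxor_def)

lemma bxor_nth[simp]: "i < length x \<Longrightarrow> i < length y \<Longrightarrow> bxor x y ! i = (x ! i \<noteq> y ! i)"
  by (simp add: bxor_def)

lemma bxor_eq_iff: "length x = length y \<Longrightarrow> length z = length y \<Longrightarrow> (x = bxor z y) \<longleftrightarrow> (z = bxor x y)"
  by (auto simp: list_eq_iff_nth_eq)

lemma bxor_assoc: "length x = length y \<Longrightarrow> length z = length y \<Longrightarrow> bxor (bxor x y) z = bxor x (bxor y z)"
  by (auto simp: list_eq_iff_nth_eq)

lemma bxor_comm: "bxor x y = bxor y x"
  by (auto simp: list_eq_iff_nth_eq)

lemma bxor_self: "bxor x x = replicate (length x) False"
  by (auto simp: list_eq_iff_nth_eq)

lemma bxor_zero: "length y = length x \<Longrightarrow> bxor x (replicate (length y) False) = x"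
  by (auto simp: list_eq_iff_nth_eq)

lemma bxor_cancel: "length x = length y \<Longrightarrow> bxor (bxor x y) y = x"
  by (auto simp: list_eq_iff_nth_eq)

definition dn :: "nat \<Rightarrow> bool list \<Rightarrow> bool list \<Rightarrow> nat" where
  "dn m b v = (\<Sum>i<m. of_bool (b ! i \<and> v ! i))"

lemma sgn_sum: "(-1::complex) ^ (\<Sum>i\<in>A. of_bool (P i)) = (\<Prod>i\<in>A. if P i then -1 else 1)"
  unfolding power_sum by (rule prod.cong) auto

lemma dn_xor2: "length v = m \<Longrightarrow> length a = m \<Longrightarrow>
   (-1::complex) ^ dn m b (bxor v a) = (-1) ^ dn m b v * (-1) ^ dn m b a"
  unfolding dn_def sgn_sum prod.distrib[symmetric]
  by (rule prod.cong) auto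

lemma dn_xor1: "length b = m \<Longrightarrow> length b' = m \<Longrightarrow>
   (-1::complex) ^ dn m (bxor b b') v = (-1) ^ dn m b v * (-1) ^ dn m b' v"
  unfolding dn_def sgn_sum prod.distrib[symmetric]
  by (rule prod.cong) auto

lemma dn_comm: "dn m b v = dn m v b"
  unfolding dn_def by (rule sum.cong) auto

lemma Dmat_alt: "Dmat m a b = (\<lambda>u v. if length u = m \<and> length v = m \<and> u = bxor v a
       then (-1::complex) ^ dn m b v else 0)"
  unfolding Dmat_def dn_def by simp

definition zv :: "nat \<Rightarrow> bool list" where "zv m = replicate m False"

definition ev :: "nat \<Rightarrow> nat \<Rightarrow> bool list" where "ev m j = (replicate m False)[j := True]"

lemma zv_len[simp]: "length (zv m) = m" by (simp add: zv_def)
lemma ev_len[simp]: "length (ev m j) = m" by (simp add: ev_def)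
lemma ev_nth[simp]: "i < m \<Longrightarrow> ev m j ! i = (i = j)" by (cases "j < m") (auto simp: ev_def nth_list_update)
lemma zv_nth[simp]: "i < m \<Longrightarrow> zv m ! i = False" by (simp add: zv_def)

lemma dn_zv[simp]: "dn m b (zv m) = 0" by (simp add: dn_def)
lemma dn_zv1[simp]: "dn m (zv m) b = 0" by (simp add: dn_def)
lemma dn_ev: "j < m \<Longrightarrow> dn m b (ev m j) = of_bool (b ! j)"
proof -
  assume j: "j < m"
  have "dn m b (ev m j) = (\<Sum>i<m. if i = j then of_bool (b ! j) else 0)"
    unfolding dn_def by (rule sum.cong) auto
  also have "\<dots> = of_bool (b ! j)" using j by (simp add: sum.delta)
  finally show ?thesis .
qed

lemma bxor_zv[simp]: "length x = m \<Longrightarrow> bxor x (zv m) = x"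
  by (auto simp: list_eq_iff_nth_eq)
lemma bxor_zv'[simp]: "length x = m \<Longrightarrow> bxor (zv m) x = x"
  by (auto simp: list_eq_iff_nth_eq)
lemma bxor_self'[simp]: "length x = m \<Longrightarrow> bxor x x = zv m"
  by (auto simp: list_eq_iff_nth_eq)

lemma charsum: assumes c: "length c = m"
  shows "(\<Sum>v\<in>bvecs m. (-1::complex) ^ dn m c v) = (if c = zv m then 2 ^ m else 0)"
proof (cases "c = zv m")
  case True thus ?thesis by (simp add: bvecs_card)
next
  case False
  then obtain j where j: "j < m" "c ! j" using c by (auto simp: list_eq_iff_nth_eq)
  let ?s = "\<lambda>v. bxor v (ev m j)"
  have bij: "bij_betw ?s (bvecs m) (bvecs m)"
    by (rule bij_betw_byWitness[where f'="?s"]) (auto simp: bxor_cancel image_def intro!: exI[of _ "bxor _ (ev m j)"] bxor_cancel[symmetric])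
  have "(\<Sum>v\<in>bvecs m. (-1::complex) ^ dn m c v) = (\<Sum>v\<in>bvecs m. (-1::complex) ^ dn m c (?s v))"
    using sum.reindex_bij_betw[OF bij, of "\<lambda>v. (-1::complex) ^ dn m c v"] by simp
  also have "\<dots> = - (\<Sum>v\<in>bvecs m. (-1::complex) ^ dn m c v)"
    by (simp add: dn_xor2 dn_ev j sum_negf[symmetric])
  finally show ?thesis using False by simp
qed

definition hw :: "nat \<Rightarrow> nat \<Rightarrow> bool list \<Rightarrow> bool list \<Rightarrow> cmat" where
  "hw m k a b = (\<lambda>u v. \<i> ^ k * Dmat m a b u v)"

lemma HW_alt: "HW m = {hw m k a b | a b k. length a = m \<and> length b = m \<and> k < 4}"
  unfolding HW_def hw_def by auto

lemma mapply_hw: assumes "length u = m" "length a = m"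
  shows "mapply m (hw m k a b) \<psi> u = \<i> ^ k * (-1) ^ dn m b (bxor u a) * \<psi> (bxor u a)"
proof -
  have "mapply m (hw m k a b) \<psi> u = (\<Sum>v\<in>bvecs m. if v = bxor u a then \<i> ^ k * (-1) ^ dn m b v * \<psi> v else 0)"
    unfolding mapply_def hw_def Dmat_alt using assms
    by (intro sum.cong) (auto simp: bxor_eq_iff)
  also have "\<dots> = \<i> ^ k * (-1) ^ dn m b (bxor u a) * \<psi> (bxor u a)"
    using assms by (simp add: sum.delta')
  finally show ?thesis .
qed

lemma mapply_hw0: "length u \<noteq> m \<Longrightarrow> mapply m (hw m k a b) \<psi> u = 0"
  unfolding mapply_def hw_def Dmat_alt by simp

lemma mmul_Dmat: assumes "length a = m" "length b = m" "length a' = m" "length b' = m"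
  shows "mmul m (Dmat m a b) (Dmat m a' b') = (\<lambda>u v. (-1) ^ dn m b a' * Dmat m (bxor a a') (bxor b b') u v)"
proof (intro ext)
  fix u v
  show "mmul m (Dmat m a b) (Dmat m a' b') u v = (-1) ^ dn m b a' * Dmat m (bxor a a') (bxor b b') u v"
  proof (cases "length v = m")
    case False thus ?thesis unfolding mmul_def Dmat_alt by simp
  next
    case True
    have "mmul m (Dmat m a b) (Dmat m a' b') u v = (\<Sum>w\<in>bvecs m. if w = bxor v a' then Dmat m a b u w * (-1) ^ dn m b' v else 0)"
      unfolding mmul_def using True assms
      by (intro sum.cong) (auto simp: Dmat_alt bxor_eq_iff)
    also have "\<dots> = Dmat m a b u (bxor v a') * (-1) ^ dn m b' v"
      using True assms by (simp add: sum.delta')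
    also have "\<dots> = (-1) ^ dn m b a' * Dmat m (bxor a a') (bxor b b') u v"
      using True assms by (auto simp: Dmat_alt bxor_assoc bxor_comm[of a' a] dn_xor1 dn_xor2 dn_comm[of m b'] dn_comm[of m b])
    finally show ?thesis .
  qed
qed

lemma mmul_scal: "mmul m (\<lambda>u v. c * A u v) (\<lambda>u v. d * B u v) = (\<lambda>u v. (c * d) * mmul m A B u v)"
  unfolding mmul_def by (auto simp: sum_distrib_left intro!: ext sum.cong)

lemma mmul_hw: assumes "length a = m" "length b = m" "length a' = m" "length b' = m"
  shows "mmul m (hw m k a b) (hw m k' a' b') = (\<lambda>u v. (\<i> ^ (k + k') * (-1) ^ dn m b a') * Dmat m (bxor a a') (bxor b b') u v)"
  unfolding hw_def mmul_scal mmul_Dmat[OF assms] by (auto simp: power_add mult.assoc)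

lemma Dmat_zero: "Dmat m (zv m) (zv m) = mid m"
  unfolding Dmat_alt mid_def by (auto intro!: ext)

lemma Dmat_inj: assumes l: "length a = m" "length b = m" "length a' = m" "length b' = m"
  and c: "c \<noteq> 0" and eq: "\<And>u v. c * Dmat m a b u v = c' * Dmat m a' b' u v"
  shows "a = a' \<and> b = b' \<and> c = c'"
proof -
  have e1: "c * Dmat m a b a (zv m) = c' * Dmat m a' b' a (zv m)" by (rule eq)
  have aa: "a = a'" using e1 c l by (auto simp: Dmat_alt split: if_splits)
  hence cc: "c = c'" using e1 c l by (auto simp: Dmat_alt)
  have bb: "b = b'"
  proof (rule ccontr)
    assume "b \<noteq> b'"
    then obtain j where j: "j < m" "b ! j \<noteq> b' ! j" using l by (auto simp: list_eq_iff_nth_eq)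
    have "c * Dmat m a b (bxor (ev m j) a) (ev m j) = c' * Dmat m a' b' (bxor (ev m j) a) (ev m j)" by (rule eq)
    thus False using j c l aa cc by (auto simp: Dmat_alt dn_ev)
  qed
  show ?thesis using aa bb cc by simp
qed

definition hs :: "nat \<Rightarrow> cmat \<Rightarrow> cmat \<Rightarrow> complex" where
  "hs m A B = (\<Sum>u\<in>bvecs m. \<Sum>v\<in>bvecs m. A u v * cnj (B u v))"

lemma hs_Dmat: assumes l: "length a = m" "length b = m" "length a' = m" "length b' = m"
  shows "hs m (Dmat m a b) (Dmat m a' b') = (if a = a' \<and> b = b' then 2 ^ m else 0)"
proof -
  have "hs m (Dmat m a b) (Dmat m a' b') = (\<Sum>v\<in>bvecs m. \<Sum>u\<in>bvecs m. Dmat m a b u v * cnj (Dmat m a' b' u v))"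
    unfolding hs_def by (rule sum.swap)
  also have "\<dots> = (\<Sum>v\<in>bvecs m. if a = a' then (-1) ^ dn m (bxor b b') v else 0)"
  proof (rule sum.cong[OF refl])
    fix v assume v: "v \<in> bvecs m"
    have "(\<Sum>u\<in>bvecs m. Dmat m a b u v * cnj (Dmat m a' b' u v)) =
          (\<Sum>u\<in>bvecs m. if u = bxor v a then (if a = a' then (-1) ^ dn m (bxor b b') v else 0) else 0)"
    proof (rule sum.cong[OF refl])
      fix u assume u: "u \<in> bvecs m"
      have "a = a'" if "bxor v a = bxor v a'" using that l v
        by (metis bxor_cancel bxor_comm in_bvecs)
      thus "Dmat m a b u v * cnj (Dmat m a' b' u v) = (if u = bxor v a then (if a = a' then (-1) ^ dn m (bxor b b') v else 0) else 0)"
        using u v l by (auto simp: Dmat_alt dn_xor1)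
    qed
    also have "\<dots> = (if a = a' then (-1) ^ dn m (bxor b b') v else 0)"
      using v l by (simp add: sum.delta')
    finally show "(\<Sum>u\<in>bvecs m. Dmat m a b u v * cnj (Dmat m a' b' u v)) = (if a = a' then (-1) ^ dn m (bxor b b') v else 0)" .
  qed
  also have "\<dots> = (if a = a' \<and> b = b' then 2 ^ m else 0)"
  proof -
    have "b = b'" if "bxor b b' = zv m" using that l
      by (metis bxor_cancel bxor_zv' bxor_comm)
    thus ?thesis using l by (cases "a = a'") (auto simp: charsum bvecs_card)
  qed
  finally show ?thesis .
qed

definition ip :: "'a set \<Rightarrow> ('a \<Rightarrow> complex) \<Rightarrow> ('a \<Rightarrow> complex) \<Rightarrow> complex" where
  "ip A f g = (\<Sum>x\<in>A. cnj (f x) * g x)"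

lemma ip_diff_l: "ip A (\<lambda>x. f x - g x) h = ip A f h - ip A g h"
  unfolding ip_def by (simp add: algebra_simps sum_subtractf)
lemma ip_diff_r: "ip A h (\<lambda>x. f x - g x) = ip A h f - ip A h g"
  unfolding ip_def by (simp add: algebra_simps sum_subtractf)
lemma ip_scal_l: "ip A (\<lambda>x. c * f x) h = cnj c * ip A f h"
  unfolding ip_def by (simp add: algebra_simps sum_distrib_left)
lemma ip_scal_r: "ip A h (\<lambda>x. c * f x) = c * ip A h f"
  unfolding ip_def by (simp add: algebra_simps sum_distrib_left)
lemma ip_cnj: "ip A g f = cnj (ip A f g)"
  unfolding ip_def by (simp add: mult.commute)
lemma ip_self: "ip A f f = complex_of_real (\<Sum>x\<in>A. (cmod (f x))\<^sup>2)"
  unfolding ip_def of_real_sum complex_norm_square by (simp add: mult.commute)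

lemma bessel2:
  assumes g1: "ip A g1 g1 = 1" and g2: "ip A g2 g2 = 1" and g12: "ip A g1 g2 = 0"
  shows "(cmod (ip A g1 f))\<^sup>2 + (cmod (ip A g2 f))\<^sup>2 \<le> (\<Sum>x\<in>A. (cmod (f x))\<^sup>2)"
proof -
  define c1 where "c1 = ip A g1 f"
  define c2 where "c2 = ip A g2 f"
  define h where "h = (\<lambda>x. f x - c1 * g1 x - c2 * g2 x)"
  have g21: "ip A g2 g1 = 0" using g12 ip_cnj[of A g2 g1] by simp
  have f1: "ip A f g1 = cnj c1" unfolding c1_def by (simp add: ip_cnj[of A f])
  have f2: "ip A f g2 = cnj c2" unfolding c2_def by (simp add: ip_cnj[of A f])
  have "ip A h h = ip A f f - c1 * cnj c1 - c2 * cnj c2"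
    unfolding h_def ip_diff_l ip_diff_r ip_scal_l ip_scal_r
    by (simp add: g1 g2 g12 g21 f1 f2 c1_def[symmetric] c2_def[symmetric] algebra_simps)
  hence "complex_of_real (\<Sum>x\<in>A. (cmod (h x))\<^sup>2) = complex_of_real ((\<Sum>x\<in>A. (cmod (f x))\<^sup>2)) - complex_of_real ((cmod c1)\<^sup>2) - complex_of_real ((cmod c2)\<^sup>2)"
    unfolding ip_self complex_norm_square by simp
  hence "complex_of_real (\<Sum>x\<in>A. (cmod (h x))\<^sup>2) = complex_of_real ((\<Sum>x\<in>A. (cmod (f x))\<^sup>2) - (cmod c1)\<^sup>2 - (cmod c2)\<^sup>2)"
    by (simp only: of_real_diff)
  hence "(\<Sum>x\<in>A. (cmod (h x))\<^sup>2) = (\<Sum>x\<in>A. (cmod (f x))\<^sup>2) - (cmod c1)\<^sup>2 - (cmod c2)\<^sup>2"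
    using of_real_eq_iff by blast
  moreover have "(\<Sum>x\<in>A. (cmod (h x))\<^sup>2) \<ge> 0" by (simp add: sum_nonneg)
  ultimately show ?thesis unfolding c1_def c2_def by linarith
qed

lemma bessel1:
  assumes g1: "ip A g1 g1 = 1"
  shows "(cmod (ip A g1 f))\<^sup>2 \<le> (\<Sum>x\<in>A. (cmod (f x))\<^sup>2)"
proof -
  define c1 where "c1 = ip A g1 f"
  define h where "h = (\<lambda>x. f x - c1 * g1 x)"
  have f1: "ip A f g1 = cnj c1" unfolding c1_def by (simp add: ip_cnj[of A f])
  have "ip A h h = ip A f f - c1 * cnj c1"
    unfolding h_def ip_diff_l ip_diff_r ip_scal_l ip_scal_r
    by (simp add: g1 f1 c1_def[symmetric] algebra_simps)
  hence "complex_of_real (\<Sum>x\<in>A. (cmod (h x))\<^sup>2) = complex_of_real ((\<Sum>x\<in>A. (cmod (f x))\<^sup>2)) - complex_of_real ((cmod c1)\<^sup>2)"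
    unfolding ip_self complex_norm_square by simp
  hence "complex_of_real (\<Sum>x\<in>A. (cmod (h x))\<^sup>2) = complex_of_real ((\<Sum>x\<in>A. (cmod (f x))\<^sup>2) - (cmod c1)\<^sup>2)"
    by (simp only: of_real_diff)
  hence "(\<Sum>x\<in>A. (cmod (h x))\<^sup>2) = (\<Sum>x\<in>A. (cmod (f x))\<^sup>2) - (cmod c1)\<^sup>2"
    using of_real_eq_iff by blast
  moreover have "(\<Sum>x\<in>A. (cmod (h x))\<^sup>2) \<ge> 0" by (simp add: sum_nonneg)
  ultimately show ?thesis unfolding c1_def by linarith
qed


lemma i_pow_mod4: "\<i> ^ n = \<i> ^ (n mod 4)"
proof -
  have "\<i> ^ n = \<i> ^ (4 * (n div 4) + n mod 4)" by simp
  also have "\<dots> = (\<i> ^ 4) ^ (n div 4) * \<i> ^ (n mod 4)" by (simp only: power_add power_mult)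
  finally show ?thesis by simp
qed

lemma i_pow_inj: "k < 4 \<Longrightarrow> k' < 4 \<Longrightarrow> \<i> ^ k = \<i> ^ k' \<Longrightarrow> k = k'"
  by (auto simp: less_Suc_eq numeral_eq_Suc complex_eq_iff)

lemma hw_len: "length a = m \<Longrightarrow> hw m k a b u v \<noteq> 0 \<Longrightarrow> length u = m \<and> length v = m"
  unfolding hw_def Dmat_alt by (auto split: if_splits)

lemma hs_scal: "hs m (\<lambda>u v. c * A u v) (\<lambda>u v. d * B u v) = c * cnj d * hs m A B"
  unfolding hs_def by (simp add: sum_distrib_left algebra_simps)

lemma hs_hw: assumes "length a = m" "length b = m" "length a' = m" "length b' = m"
  shows "hs m (hw m k a b) (hw m k' a' b') = (if a = a' \<and> b = b' then \<i>^k * cnj (\<i>^k') * 2 ^ m else 0)"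
  unfolding hw_def hs_scal hs_Dmat[OF assms] by simp

lemma hs_hw_self: assumes "length a = m" "length b = m"
  shows "hs m (hw m k a b) (hw m k a b) = 2 ^ m"
proof -
  have "\<i> ^ k * cnj (\<i> ^ k) = 1"
    by (simp add: power_mult_distrib[symmetric])
  thus ?thesis using hs_hw[OF assms assms, of k k] by simp
qed

lemma mmul_mid_mid: "mmul m (mid m) (mid m) = mid m"
proof (intro ext)
  fix u v
  show "mmul m (mid m) (mid m) u v = mid m u v"
  proof (cases "length u = m \<and> u = v")
    case True
    thus ?thesis unfolding mmul_def mid_def by (simp add: if_distrib[of "\<lambda>x. x * _"] sum.delta cong: if_cong)
  next
    case False
    thus ?thesis unfolding mmul_def mid_def by (auto intro!: sum.neutral)
  qed
qed

lemma mmul_scal1: "mmul m (\<lambda>u v. c * A u v) B = (\<lambda>u v. c * mmul m A B u v)"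
  unfolding mmul_def by (auto simp: sum_distrib_left algebra_simps intro!: ext sum.cong)

lemma stab_orth: assumes S: "stabilizer_group m S" and E: "E \<in> S" and F: "F \<in> S" and ne: "E \<noteq> F"
  shows "hs m E F = 0"
proof -
  have SH: "S \<subseteq> HW m" using S by (simp add: stabilizer_group_def)
  obtain k a b where Ed: "E = hw m k a b" "length a = m" "length b = m" "k < 4" using E SH HW_alt by blast
  obtain k' a' b' where Fd: "F = hw m k' a' b'" "length a' = m" "length b' = m" "k' < 4" using F SH HW_alt by blast
  show ?thesis
  proof (cases "a = a' \<and> b = b'")
    case False thus ?thesis using Ed Fd hs_hw by simp
  next
    case True
    have kk: "k \<noteq> k'" using ne Ed Fd True by auto
    define d where "d = (k + 4 - k') mod 4"
    have k4: "k \<in> {0,1,2,3}" "k' \<in> {0,1,2,3}" using Ed(4) Fd(4) by auto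
    have d: "d = 1 \<or> d = 2 \<or> d = 3" using kk k4 unfolding d_def by auto
    have ik: "\<i> ^ k = \<i> ^ d * \<i> ^ k'"
    proof -
      have "\<i> ^ d * \<i> ^ k' = \<i> ^ (d + k')" by (simp add: power_add)
      also have "\<dots> = \<i> ^ ((d + k') mod 4)" by (rule i_pow_mod4)
      also have "(d + k') mod 4 = k" unfolding d_def using k4 by auto
      finally show ?thesis by simp
    qed
    have EF: "E = (\<lambda>u v. \<i> ^ d * F u v)" using Ed Fd True ik by (auto simp: hw_def intro!: ext)
    obtain G where G: "G \<in> S" "mmul m F G = mid m" using S F by (auto simp: stabilizer_group_def)
    have EG: "mmul m E G = (\<lambda>u v. \<i> ^ d * mid m u v)" unfolding EF mmul_scal1 G(2) ..
    have clos: "\<forall>E\<in>S. \<forall>F\<in>S. mmul m E F \<in> S" using S by (simp add: stabilizer_group_def)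
    have c1: "(\<lambda>u v. \<i> ^ d * mid m u v) \<in> S" using clos E G(1) EG by metis
    hence c2: "mmul m (\<lambda>u v. \<i> ^ d * mid m u v) (\<lambda>u v. \<i> ^ d * mid m u v) \<in> S"
      using S by (simp add: stabilizer_group_def)
    have neg: "(\<lambda>u v. - mid m u v) \<notin> S" using S by (simp add: stabilizer_group_def)
    show ?thesis
    proof (cases "d = 2")
      case True
      hence "(\<lambda>u v. \<i> ^ d * mid m u v) = (\<lambda>u v. - mid m u v)" by simp
      thus ?thesis using c1 neg by simp
    next
      case False
      hence "d = 1 \<or> d = 3" using d by blast
      hence "\<i> ^ d * \<i> ^ d = -1" by (elim disjE) (simp_all add: numeral_eq_Suc)
      hence "mmul m (\<lambda>u v. \<i> ^ d * mid m u v) (\<lambda>u v. \<i> ^ d * mid m u v) = (\<lambda>u v. - mid m u v)"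
        unfolding mmul_scal mmul_mid_mid by simp
      thus ?thesis using c2 neg by simp
    qed
  qed
qed

lemma HW_finite: "finite (HW m)"
proof -
  have "HW m \<subseteq> (\<lambda>(k,a,b). hw m k a b) ` ({..<4} \<times> bvecs m \<times> bvecs m)"
  proof
    fix E assume "E \<in> HW m"
    then obtain k a b where "E = hw m k a b" "length a = m" "length b = m" "k < 4" unfolding HW_alt by blast
    thus "E \<in> (\<lambda>(k,a,b). hw m k a b) ` ({..<4} \<times> bvecs m \<times> bvecs m)"
      by (intro image_eqI[of _ _ "(k,a,b)"]) auto
  qed
  thus ?thesis by (rule finite_subset) auto
qed

lemma frob: assumes fin: "finite S" and SH: "S \<subseteq> HW m"
  and orth: "\<And>E F. E \<in> S \<Longrightarrow> F \<in> S \<Longrightarrow> E \<noteq> F \<Longrightarrow> hs m E F = 0"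
  shows "(\<Sum>u\<in>bvecs m. \<Sum>v\<in>bvecs m. (cmod (\<Sum>E\<in>S. E u v))\<^sup>2) = real (card S) * 2 ^ m"
proof -
  have "complex_of_real (\<Sum>u\<in>bvecs m. \<Sum>v\<in>bvecs m. (cmod (\<Sum>E\<in>S. E u v))\<^sup>2)
     = (\<Sum>u\<in>bvecs m. \<Sum>v\<in>bvecs m. (\<Sum>E\<in>S. E u v) * cnj (\<Sum>F\<in>S. F u v))"
    unfolding of_real_sum complex_norm_square ..
  also have "\<dots> = (\<Sum>u\<in>bvecs m. \<Sum>v\<in>bvecs m. \<Sum>E\<in>S. \<Sum>F\<in>S. E u v * cnj (F u v))"
    by (simp add: cnj_sum sum_product)
  also have "\<dots> = (\<Sum>u\<in>bvecs m. \<Sum>E\<in>S. \<Sum>v\<in>bvecs m. \<Sum>F\<in>S. E u v * cnj (F u v))"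
    by (rule sum.cong[OF refl], rule sum.swap)
  also have "\<dots> = (\<Sum>u\<in>bvecs m. \<Sum>E\<in>S. \<Sum>F\<in>S. \<Sum>v\<in>bvecs m. E u v * cnj (F u v))"
    by (intro sum.cong refl, rule sum.swap)
  also have "\<dots> = (\<Sum>E\<in>S. \<Sum>u\<in>bvecs m. \<Sum>F\<in>S. \<Sum>v\<in>bvecs m. E u v * cnj (F u v))"
    by (rule sum.swap)
  also have "\<dots> = (\<Sum>E\<in>S. \<Sum>F\<in>S. hs m E F)"
    unfolding hs_def by (intro sum.cong refl, rule sum.swap)
  also have "\<dots> = (\<Sum>E\<in>S. hs m E E)"
  proof (rule sum.cong[OF refl])
    fix E assume E: "E \<in> S"
    have "(\<Sum>F\<in>S. hs m E F) = (\<Sum>F\<in>S. if F = E then hs m E E else 0)"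
      by (rule sum.cong) (auto dest: orth[OF E])
    thus "(\<Sum>F\<in>S. hs m E F) = hs m E E" using fin E by (simp add: sum.delta')
  qed
  also have "\<dots> = (\<Sum>E\<in>S. 2 ^ m)"
  proof (rule sum.cong[OF refl])
    fix E assume "E \<in> S"
    then obtain k a b where "E = hw m k a b" "length a = m" "length b = m" using SH HW_alt by blast
    thus "hs m E E = 2 ^ m" using hs_hw_self by simp
  qed
  also have "\<dots> = complex_of_real (real (card S) * 2 ^ m)" by simp
  finally show ?thesis using of_real_eq_iff by blast
qed

lemma Q_fixed: assumes fin: "finite S" and hfix: "\<And>E. E \<in> S \<Longrightarrow> mapply m E \<phi> = \<phi>"
  shows "(\<Sum>v\<in>bvecs m. (\<Sum>E\<in>S. E u v) * \<phi> v) = of_nat (card S) * \<phi> u"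
proof -
  have "(\<Sum>v\<in>bvecs m. (\<Sum>E\<in>S. E u v) * \<phi> v) = (\<Sum>E\<in>S. mapply m E \<phi> u)"
    unfolding mapply_def sum_distrib_right by (rule sum.swap)
  also have "\<dots> = (\<Sum>E\<in>S. \<phi> u)" using hfix by simp
  finally show ?thesis by simp
qed

lemma row_ip: assumes fin: "finite S" and hfix: "\<And>E. E \<in> S \<Longrightarrow> mapply m E \<phi> = \<phi>"
  shows "cmod (ip (bvecs m) \<phi> (\<lambda>v. cnj (\<Sum>E\<in>S. E u v))) = real (card S) * cmod (\<phi> u)"
proof -
  have "ip (bvecs m) \<phi> (\<lambda>v. cnj (\<Sum>E\<in>S. E u v)) = cnj (\<Sum>v\<in>bvecs m. (\<Sum>E\<in>S. E u v) * \<phi> v)"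
    unfolding ip_def cnj_sum by (simp add: mult.commute)
  also have "\<dots> = cnj (of_nat (card S) * \<phi> u)" using Q_fixed[OF fin hfix] by simp
  finally show ?thesis by (simp add: norm_mult)
qed

lemma norm1: "ip (bvecs m) \<phi> \<phi> = 1 \<Longrightarrow> (\<Sum>u\<in>bvecs m. (cmod (\<phi> u))\<^sup>2) = 1"
  unfolding ip_self using of_real_eq_1_iff by blast

lemma card_bound1: assumes fin: "finite S" and SH: "S \<subseteq> HW m"
  and orth: "\<And>E F. E \<in> S \<Longrightarrow> F \<in> S \<Longrightarrow> E \<noteq> F \<Longrightarrow> hs m E F = 0"
  and ne: "S \<noteq> {}"
  and fix1: "\<And>E. E \<in> S \<Longrightarrow> mapply m E \<phi>1 = \<phi>1" and n1: "ip (bvecs m) \<phi>1 \<phi>1 = 1"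
  shows "card S \<le> 2 ^ m"
proof -
  let ?N = "real (card S)"
  have "\<forall>u\<in>bvecs m. (?N * cmod (\<phi>1 u))\<^sup>2 \<le> (\<Sum>v\<in>bvecs m. (cmod (\<Sum>E\<in>S. E u v))\<^sup>2)"
  proof
    fix u
    have "(cmod (ip (bvecs m) \<phi>1 (\<lambda>v. cnj (\<Sum>E\<in>S. E u v))))\<^sup>2 \<le> (\<Sum>v\<in>bvecs m. (cmod (cnj (\<Sum>E\<in>S. E u v)))\<^sup>2)"
      by (rule bessel1[OF n1])
    thus "(?N * cmod (\<phi>1 u))\<^sup>2 \<le> (\<Sum>v\<in>bvecs m. (cmod (\<Sum>E\<in>S. E u v))\<^sup>2)"
      using row_ip[OF fin fix1] by (simp del: cnj_sum)
  qed
  hence "(\<Sum>u\<in>bvecs m. (?N * cmod (\<phi>1 u))\<^sup>2) \<le> (\<Sum>u\<in>bvecs m. \<Sum>v\<in>bvecs m. (cmod (\<Sum>E\<in>S. E u v))\<^sup>2)"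
    by (intro sum_mono) blast
  also have "\<dots> = ?N * 2 ^ m" by (rule frob[OF fin SH orth])
  finally have "?N * ?N * (\<Sum>u\<in>bvecs m. (cmod (\<phi>1 u))\<^sup>2) \<le> ?N * 2 ^ m"
    by (simp add: power_mult_distrib sum_distrib_left power2_eq_square algebra_simps)
  hence "?N * ?N \<le> ?N * 2 ^ m" using norm1[OF n1] by simp
  moreover have "?N > 0" using ne fin by (simp add: card_gt_0_iff)
  ultimately have "?N \<le> 2 ^ m" by simp
  thus ?thesis by (metis of_nat_le_iff of_nat_numeral of_nat_power)
qed

lemma card_bound2: assumes fin: "finite S" and SH: "S \<subseteq> HW m"
  and orth: "\<And>E F. E \<in> S \<Longrightarrow> F \<in> S \<Longrightarrow> E \<noteq> F \<Longrightarrow> hs m E F = 0"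
  and ne: "S \<noteq> {}"
  and fix1: "\<And>E. E \<in> S \<Longrightarrow> mapply m E \<phi>1 = \<phi>1" and n1: "ip (bvecs m) \<phi>1 \<phi>1 = 1"
  and fix2: "\<And>E. E \<in> S \<Longrightarrow> mapply m E \<phi>2 = \<phi>2" and n2: "ip (bvecs m) \<phi>2 \<phi>2 = 1"
  and o12: "ip (bvecs m) \<phi>1 \<phi>2 = 0"
  shows "2 * card S \<le> 2 ^ m"
proof -
  let ?N = "real (card S)"
  have "\<forall>u\<in>bvecs m. (?N * cmod (\<phi>1 u))\<^sup>2 + (?N * cmod (\<phi>2 u))\<^sup>2 \<le> (\<Sum>v\<in>bvecs m. (cmod (\<Sum>E\<in>S. E u v))\<^sup>2)"
  proof
    fix u
    have "(cmod (ip (bvecs m) \<phi>1 (\<lambda>v. cnj (\<Sum>E\<in>S. E u v))))\<^sup>2 + (cmod (ip (bvecs m) \<phi>2 (\<lambda>v. cnj (\<Sum>E\<in>S. E u v))))\<^sup>2 \<le> (\<Sum>v\<in>bvecs m. (cmod (cnj (\<Sum>E\<in>S. E u v)))\<^sup>2)"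
      by (rule bessel2[OF n1 n2 o12])
    thus "(?N * cmod (\<phi>1 u))\<^sup>2 + (?N * cmod (\<phi>2 u))\<^sup>2 \<le> (\<Sum>v\<in>bvecs m. (cmod (\<Sum>E\<in>S. E u v))\<^sup>2)"
      using row_ip[OF fin fix1] row_ip[OF fin fix2] by (simp del: cnj_sum)
  qed
  hence "(\<Sum>u\<in>bvecs m. (?N * cmod (\<phi>1 u))\<^sup>2 + (?N * cmod (\<phi>2 u))\<^sup>2) \<le> (\<Sum>u\<in>bvecs m. \<Sum>v\<in>bvecs m. (cmod (\<Sum>E\<in>S. E u v))\<^sup>2)"
    by (intro sum_mono) blast
  also have "\<dots> = ?N * 2 ^ m" by (rule frob[OF fin SH orth])
  finally have "?N * ?N * (\<Sum>u\<in>bvecs m. (cmod (\<phi>1 u))\<^sup>2) + ?N * ?N * (\<Sum>u\<in>bvecs m. (cmod (\<phi>2 u))\<^sup>2) \<le> ?N * 2 ^ m"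
    by (simp add: power_mult_distrib sum_distrib_left power2_eq_square algebra_simps sum.distrib)
  hence "?N * (2 * ?N) \<le> ?N * 2 ^ m" using norm1[OF n1] norm1[OF n2] by simp
  moreover have "?N > 0" using ne fin by (simp add: card_gt_0_iff)
  ultimately have "2 * ?N \<le> 2 ^ m" by simp
  thus ?thesis by (metis of_nat_le_iff of_nat_numeral of_nat_power of_nat_mult)
qed

lemma mapply_lin: "mapply m E (\<lambda>a. f a - c * g a) = (\<lambda>u. mapply m E f u - c * mapply m E g u)"
  unfolding mapply_def by (auto intro!: ext simp: algebra_simps sum_subtractf sum_distrib_left)

lemma mapply_scal: "mapply m E (\<lambda>a. c * g a) = (\<lambda>u. c * mapply m E g u)"
  unfolding mapply_def by (auto intro!: ext simp: algebra_simps sum_distrib_left)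

lemma ip_cnorm2: "ip (bvecs m) \<psi> \<psi> = complex_of_real (cnorm2 m \<psi>)"
  unfolding ip_self cnorm2_def ..

lemma stab_props: assumes "stabilizer_group m S"
  shows "finite S" "S \<subseteq> HW m" "S \<noteq> {}"
    "\<And>E F. E \<in> S \<Longrightarrow> F \<in> S \<Longrightarrow> E \<noteq> F \<Longrightarrow> hs m E F = 0"
proof -
  show SH: "S \<subseteq> HW m" using assms by (simp add: stabilizer_group_def)
  thus "finite S" using HW_finite finite_subset by blast
  show "S \<noteq> {}" using assms by (auto simp: stabilizer_group_def)
  show "\<And>E F. E \<in> S \<Longrightarrow> F \<in> S \<Longrightarrow> E \<noteq> F \<Longrightarrow> hs m E F = 0" using stab_orth[OF assms] by blast
qed

lemma fixed_dim1: assumes S: "stabilizer_group m S" and cS: "card S = 2 ^ m"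
  and psi: "\<psi> \<in> cvecs m" "\<And>E. E \<in> S \<Longrightarrow> mapply m E \<psi> = \<psi>" "ip (bvecs m) \<psi> \<psi> = 1"
  and phi: "\<phi> \<in> cvecs m" "\<And>E. E \<in> S \<Longrightarrow> mapply m E \<phi> = \<phi>"
  shows "\<phi> = (\<lambda>a. ip (bvecs m) \<psi> \<phi> * \<psi> a)"
proof -
  note P = stab_props[OF S]
  define c where "c = ip (bvecs m) \<psi> \<phi>"
  define d where "d = (\<lambda>a. \<phi> a - c * \<psi> a)"
  have dfix: "\<And>E. E \<in> S \<Longrightarrow> mapply m E d = d" unfolding d_def mapply_lin using psi phi by simp
  have od: "ip (bvecs m) \<psi> d = 0" unfolding d_def ip_diff_r ip_scal_r psi(3) c_def by simp
  define n where "n = (\<Sum>x\<in>bvecs m. (cmod (d x))\<^sup>2)"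
  have n0: "n = 0"
  proof (rule ccontr)
    assume "n \<noteq> 0"
    hence npos: "n > 0" unfolding n_def by (simp add: less_le sum_nonneg)
    define e where "e = (\<lambda>a. complex_of_real (1 / sqrt n) * d a)"
    have efix: "\<And>E. E \<in> S \<Longrightarrow> mapply m E e = e" unfolding e_def mapply_scal using dfix by simp
    have "ip (bvecs m) e e = complex_of_real (1 / sqrt n) * complex_of_real (1 / sqrt n) * complex_of_real n"
      unfolding e_def ip_scal_l ip_scal_r ip_self n_def by simp
    also have "\<dots> = 1" using npos by (simp flip: of_real_mult)
    finally have ne: "ip (bvecs m) e e = 1" .
    have oe: "ip (bvecs m) \<psi> e = 0" unfolding e_def ip_scal_r od by simp
    have "2 * card S \<le> 2 ^ m" by (rule card_bound2[OF P(1,2,4,3) psi(2,3) efix ne oe])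
    thus False using cS by simp
  qed
  have "\<forall>x\<in>bvecs m. (cmod (d x))\<^sup>2 = 0" using n0 unfolding n_def
    by (subst (asm) sum_nonneg_eq_0_iff) auto
  hence "\<forall>x\<in>bvecs m. d x = 0" by simp
  hence "\<forall>x. \<phi> x = c * \<psi> x" using psi(1) phi(1) unfolding d_def cvecs_def by auto
  thus ?thesis unfolding c_def by auto
qed

lemma fixed_space_eq: assumes S: "stabilizer_group m S" and cS: "card S = 2 ^ m"
  and psi: "\<psi> \<in> cvecs m" "\<And>E. E \<in> S \<Longrightarrow> mapply m E \<psi> = \<psi>" "cnorm2 m \<psi> = 1"
  shows "fixed_space m S = {(\<lambda>a. c * \<psi> a) | c. True}"
proof
  have n: "ip (bvecs m) \<psi> \<psi> = 1" using psi(3) ip_cnorm2 by simp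
  show "fixed_space m S \<subseteq> {(\<lambda>a. c * \<psi> a) | c. True}"
    using fixed_dim1[OF S cS psi(1,2) n] unfolding fixed_space_def by blast
  show "{(\<lambda>a. c * \<psi> a) | c. True} \<subseteq> fixed_space m S"
    using psi(1,2) unfolding fixed_space_def cvecs_def by (auto simp: mapply_scal)
qed


definition sg :: "bool \<Rightarrow> complex" where "sg b = (if b then -1 else 1)"

lemma sg_xor: "sg (p \<noteq> q) = sg p * sg q" by (simp add: sg_def)
lemma sg_card: "finite A \<Longrightarrow> (-1::complex) ^ card {x\<in>A. P x} = (\<Prod>x\<in>A. sg (P x))"
proof -
  assume fin: "finite A"
  have "card {x\<in>A. P x} = (\<Sum>x\<in>{x\<in>A. P x}. 1)" by (rule card_eq_sum)
  also have "\<dots> = (\<Sum>x\<in>A. if P x then 1 else 0)" by (rule sum.inter_filter[OF fin])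
  finally have "card {x\<in>A. P x} = (\<Sum>x\<in>A. if P x then 1 else 0)" .
  hence "card {x\<in>A. P x} = (\<Sum>x\<in>A. of_bool (P x))" by (simp add: of_bool_def)
  thus ?thesis by (simp add: sgn_sum sg_def)
qed
lemma sg_odd: "sg (odd n) = (-1) ^ n" by (simp add: sg_def)
lemma sg_eq: "sg p = sg q \<longleftrightarrow> p = q" by (simp add: sg_def)
lemma dn_sg: "(-1::complex) ^ dn m b v = (\<Prod>i<m. sg (b ! i \<and> v ! i))"
  unfolding dn_def sgn_sum sg_def ..

lemma card_lt_sg: "(-1::complex) ^ card {j. j < (r::nat) \<and> P j} = (\<Prod>j<r. sg (P j))"
proof -
  have e: "{j. j < r \<and> P j} = {j\<in>{..<r}. P j}" by auto
  have "(-1::complex) ^ card {j\<in>{..<r}. P j} = (\<Prod>j<r. sg (P j))" by (rule sg_card) simp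
  thus ?thesis unfolding e .
qed

locale crf =
  fixes m :: nat and r :: nat and H :: "nat \<Rightarrow> nat \<Rightarrow> bool" and piv :: "nat list"
  assumes cref: "is_cref m r H piv"
begin

lemma piv_props: "length piv = r" "distinct piv" "set piv \<subseteq> {..<m}" "r \<le> m"
  "\<And>j. j < r \<Longrightarrow> piv ! j < m"
proof -
  show l: "length piv = r" using cref by (simp add: is_cref_def)
  show d: "distinct piv" using cref by (simp add: is_cref_def strict_sorted_iff)
  show s: "set piv \<subseteq> {..<m}" using cref l by (auto simp: is_cref_def in_set_conv_nth)
  show "\<And>j. j < r \<Longrightarrow> piv ! j < m" using cref by (simp add: is_cref_def)
  have "card (set piv) \<le> card {..<m}" using s by (intro card_mono) auto
  thus "r \<le> m" using distinct_card[OF d] l by simp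
qed

lemma nonpiv_props: "length (nonpiv m piv) = m - r" "distinct (nonpiv m piv)"
  "set (nonpiv m piv) = {i. i < m \<and> i \<notin> set piv}"
proof -
  show s: "set (nonpiv m piv) = {i. i < m \<and> i \<notin> set piv}" by (auto simp: nonpiv_def)
  show d: "distinct (nonpiv m piv)" by (simp add: nonpiv_def)
  have "{i. i < m \<and> i \<notin> set piv} = {..<m} - set piv" by auto
  hence "card {i. i < m \<and> i \<notin> set piv} = m - r"
    using piv_props distinct_card[of piv] by (simp add: card_Diff_subset)
  thus "length (nonpiv m piv) = m - r" using distinct_card[OF d] s by simp
qed

lemma H_piv: "j < r \<Longrightarrow> k < r \<Longrightarrow> H (piv ! j) k = (j = k)"
  using cref by (simp add: is_cref_def)

lemma piv_or_nonpiv: "i < m \<Longrightarrow> (\<exists>j<r. piv ! j = i) \<or> (\<exists>k<m-r. nonpiv m piv ! k = i)"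
proof -
  assume i: "i < m"
  show ?thesis
  proof (cases "i \<in> set piv")
    case True thus ?thesis using piv_props by (auto simp: in_set_conv_nth)
  next
    case False
    hence "i \<in> set (nonpiv m piv)" using nonpiv_props i by auto
    then obtain k where "k < length (nonpiv m piv)" "nonpiv m piv ! k = i" by (meson in_set_conv_nth)
    thus ?thesis using nonpiv_props(1) by auto
  qed
qed

lemma nonpiv_lt: "k < m - r \<Longrightarrow> nonpiv m piv ! k < m"
proof -
  assume k: "k < m - r"
  have "nonpiv m piv ! k \<in> set (nonpiv m piv)" by (rule nth_mem) (use nonpiv_props(1) k in simp)
  thus ?thesis using nonpiv_props(3) by blast
qed

lemma nonpiv_not_piv: "k < m - r \<Longrightarrow> j < r \<Longrightarrow> nonpiv m piv ! k \<noteq> piv ! j"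
proof -
  assume k: "k < m - r" and j: "j < r"
  have "nonpiv m piv ! k \<in> set (nonpiv m piv)" by (rule nth_mem) (use nonpiv_props(1) k in simp)
  hence "nonpiv m piv ! k \<notin> set piv" using nonpiv_props(3) by simp
  moreover have "piv ! j \<in> set piv" by (rule nth_mem) (use j piv_props(1) in simp)
  ultimately show ?thesis by auto
qed

lemma nonpiv_inj: "k < m - r \<Longrightarrow> k' < m - r \<Longrightarrow> nonpiv m piv ! k = nonpiv m piv ! k' \<longleftrightarrow> k = k'"
  using nonpiv_props by (simp add: nth_eq_iff_index_eq)

lemma piv_inj: "j < r \<Longrightarrow> j' < r \<Longrightarrow> piv ! j = piv ! j' \<longleftrightarrow> j = j'"
  using piv_props by (simp add: nth_eq_iff_index_eq)

lemma Pmul_len[simp]: "length (Pmul m r H piv u) = m" by (simp add: Pmul_def)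

lemma Pmul_nth: "i < m \<Longrightarrow> Pmul m r H piv u ! i = odd (card {j. j < r \<and> H i j \<and> u ! j}
     + card {k. k < m - r \<and> nonpiv m piv ! k = i \<and> u ! (r + k)})"
  by (simp add: Pmul_def)

lemma card_single: "k0 < n \<Longrightarrow> (\<And>k. k < n \<Longrightarrow> Q k \<longleftrightarrow> k = k0) \<Longrightarrow>
   card {k. k < n \<and> Q k \<and> P k} = of_bool (P k0)"
proof -
  assume "k0 < n" "\<And>k. k < n \<Longrightarrow> Q k \<longleftrightarrow> k = k0"
  hence "{k. k < n \<and> Q k \<and> P k} = (if P k0 then {k0} else {})" by auto
  thus ?thesis by simp
qed

lemma Pmul_piv: "j0 < r \<Longrightarrow> Pmul m r H piv u ! (piv ! j0) = u ! j0"
proof -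
  assume j0: "j0 < r"
  have c1: "card {j. j < r \<and> H (piv ! j0) j \<and> u ! j} = of_bool (u ! j0)"
    by (rule card_single[OF j0]) (use j0 H_piv in auto)
  have e2: "{k. k < m - r \<and> nonpiv m piv ! k = piv ! j0 \<and> u ! (r + k)} = {}"
    using nonpiv_not_piv[OF _ j0] by blast
  have c2: "card {k. k < m - r \<and> nonpiv m piv ! k = piv ! j0 \<and> u ! (r + k)} = 0"
    unfolding e2 by simp
  have "Pmul m r H piv u ! (piv ! j0) = odd (card {j. j < r \<and> H (piv ! j0) j \<and> u ! j}
     + card {k. k < m - r \<and> nonpiv m piv ! k = piv ! j0 \<and> u ! (r + k)})"
    by (rule Pmul_nth) (use piv_props j0 in simp)
  also have "\<dots> = odd (of_bool (u ! j0) + (0::nat))" by (simp only: c1 c2)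
  finally show ?thesis by simp
qed

lemma Pmul_nonpiv: "k0 < m - r \<Longrightarrow> Pmul m r H piv u ! (nonpiv m piv ! k0) =
   (odd (card {j. j < r \<and> H (nonpiv m piv ! k0) j \<and> u ! j}) \<noteq> u ! (r + k0))"
proof -
  assume k0: "k0 < m - r"
  have c2: "card {k. k < m - r \<and> nonpiv m piv ! k = nonpiv m piv ! k0 \<and> u ! (r + k)} = of_bool (u ! (r + k0))"
    by (rule card_single[OF k0]) (use nonpiv_inj k0 in auto)
  have "Pmul m r H piv u ! (nonpiv m piv ! k0) = odd (card {j. j < r \<and> H (nonpiv m piv ! k0) j \<and> u ! j}
     + card {k. k < m - r \<and> nonpiv m piv ! k = nonpiv m piv ! k0 \<and> u ! (r + k)})"
    by (rule Pmul_nth) (use nonpiv_lt k0 in simp)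
  also have "\<dots> = odd (card {j. j < r \<and> H (nonpiv m piv ! k0) j \<and> u ! j} + of_bool (u ! (r + k0)))"
    by (simp only: c2)
  finally show ?thesis by (cases "u ! (r + k0)") auto
qed

definition pinvf :: "bool list \<Rightarrow> bool list" where
  "pinvf a = map (\<lambda>j. if j < r then a ! (piv ! j)
       else (a ! (nonpiv m piv ! (j - r)) \<noteq> odd (card {l. l < r \<and> H (nonpiv m piv ! (j - r)) l \<and> a ! (piv ! l)}))) [0..<m]"

lemma pinvf_len[simp]: "length (pinvf a) = m" by (simp add: pinvf_def)

lemma pinvf_Pmul: "length u = m \<Longrightarrow> pinvf (Pmul m r H piv u) = u"
proof (rule nth_equalityI)
  assume u: "length u = m"
  show "length (pinvf (Pmul m r H piv u)) = length u" using u by simp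
  fix j assume "j < length (pinvf (Pmul m r H piv u))"
  hence j: "j < m" by simp
  show "pinvf (Pmul m r H piv u) ! j = u ! j"
  proof (cases "j < r")
    case True thus ?thesis using j by (simp add: pinvf_def Pmul_piv)
  next
    case False
    define k where "k = j - r"
    have k: "k < m - r" "j = r + k" using False j unfolding k_def by auto
    have eq: "{l. l < r \<and> H (nonpiv m piv ! k) l \<and> Pmul m r H piv u ! (piv ! l)} = {l. l < r \<and> H (nonpiv m piv ! k) l \<and> u ! l}"
      using Pmul_piv by auto
    show ?thesis using False j k unfolding pinvf_def by (simp add: Pmul_nonpiv eq) argo
  qed
qed

lemma Pmul_pinvf: "length a = m \<Longrightarrow> Pmul m r H piv (pinvf a) = a"
proof (rule nth_equalityI)
  assume a: "length a = m"
  show "length (Pmul m r H piv (pinvf a)) = length a" using a by simp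
  fix i assume "i < length (Pmul m r H piv (pinvf a))"
  hence i: "i < m" by simp
  show "Pmul m r H piv (pinvf a) ! i = a ! i"
    using piv_or_nonpiv[OF i]
  proof
    assume "\<exists>j<r. piv ! j = i"
    then obtain j where j: "j < r" "piv ! j = i" by blast
    have "Pmul m r H piv (pinvf a) ! (piv ! j) = pinvf a ! j" by (rule Pmul_piv[OF j(1)])
    also have "pinvf a ! j = a ! (piv ! j)" using j(1) piv_props(4) by (simp add: pinvf_def)
    finally show ?thesis using j(2) by simp
  next
    assume "\<exists>k<m-r. nonpiv m piv ! k = i"
    then obtain k where k: "k < m - r" "nonpiv m piv ! k = i" by blast
    have eq: "{j. j < r \<and> H i j \<and> pinvf a ! j} = {l. l < r \<and> H i l \<and> a ! (piv ! l)}"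
    proof -
      have "\<And>j. j < r \<Longrightarrow> pinvf a ! j = a ! (piv ! j)" using piv_props(4) by (simp add: pinvf_def)
      thus ?thesis by blast
    qed
    have p2: "pinvf a ! (r + k) = (a ! (nonpiv m piv ! k) \<noteq> odd (card {l. l < r \<and> H (nonpiv m piv ! k) l \<and> a ! (piv ! l)}))"
      using k(1) by (simp add: pinvf_def)
    have "Pmul m r H piv (pinvf a) ! (nonpiv m piv ! k) =
       (odd (card {j. j < r \<and> H (nonpiv m piv ! k) j \<and> pinvf a ! j}) \<noteq> pinvf a ! (r + k))"
      by (rule Pmul_nonpiv[OF k(1)])
    also have "\<dots> = a ! (nonpiv m piv ! k)" unfolding p2 k(2) eq by argo
    finally show ?thesis using k(2) by simp
  qed
qed

lemma Pinv_eq: "length a = m \<Longrightarrow> Pinv m r H piv a = pinvf a"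
  unfolding Pinv_def
proof (rule the_equality)
  assume a: "length a = m"
  show "length (pinvf a) = m \<and> Pmul m r H piv (pinvf a) = a" using a Pmul_pinvf by simp
  fix u assume u: "length u = m \<and> Pmul m r H piv u = a"
  hence "pinvf (Pmul m r H piv u) = u" using pinvf_Pmul by blast
  thus "u = pinvf a" using u by simp
qed

lemma Pinv_len: "length a = m \<Longrightarrow> length (Pinv m r H piv a) = m" by (simp add: Pinv_eq)
lemma Pmul_Pinv: "length a = m \<Longrightarrow> Pmul m r H piv (Pinv m r H piv a) = a" by (simp add: Pinv_eq Pmul_pinvf)
lemma Pinv_Pmul: "length u = m \<Longrightarrow> Pinv m r H piv (Pmul m r H piv u) = u" by (simp add: Pinv_eq pinvf_Pmul)
lemma Pmul_inj: "length u = m \<Longrightarrow> length u' = m \<Longrightarrow> Pmul m r H piv u = Pmul m r H piv u' \<longleftrightarrow> u = u'"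
  by (metis pinvf_Pmul)

end


lemma sg_and_xor: "sg (p \<and> (a \<noteq> b)) = sg (p \<and> a) * sg (p \<and> b)" by (simp add: sg_def)
lemma sg_False[simp]: "sg False = 1" by (simp add: sg_def)
lemma sg_True[simp]: "sg True = -1" by (simp add: sg_def)

lemma prod_split_nat: "(\<Prod>l<r + (n::nat). (f l :: complex)) = (\<Prod>l<r. f l) * (\<Prod>k<n. f (r + k))"
  by (induction n) (simp_all add: mult.assoc)

context crf begin

definition colv :: "nat \<Rightarrow> bool list" where "colv j = map (\<lambda>i. H i j) [0..<m]"

lemma colv_len[simp]: "length (colv j) = m" by (simp add: colv_def)
lemma colv_nth[simp]: "i < m \<Longrightarrow> colv j ! i = H i j" by (simp add: colv_def)

lemma Pmul_sg: "i < m \<Longrightarrow> sg (Pmul m r H piv u ! i) =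
   (\<Prod>j<r. sg (H i j \<and> u ! j)) * (\<Prod>k<m-r. sg (nonpiv m piv ! k = i \<and> u ! (r + k)))"
proof -
  assume i: "i < m"
  have "sg (Pmul m r H piv u ! i) = (-1) ^ (card {j. j < r \<and> H i j \<and> u ! j}
     + card {k. k < m - r \<and> nonpiv m piv ! k = i \<and> u ! (r + k)})"
    unfolding Pmul_nth[OF i] by (rule sg_odd)
  also have "\<dots> = (\<Prod>j<r. sg (H i j \<and> u ! j)) * (\<Prod>k<m-r. sg (nonpiv m piv ! k = i \<and> u ! (r + k)))"
    unfolding power_add card_lt_sg ..
  finally show ?thesis .
qed

lemma Pmul_xor: assumes u: "length u = m" "length u' = m"
  shows "Pmul m r H piv (bxor u u') = bxor (Pmul m r H piv u) (Pmul m r H piv u')"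
proof (rule nth_equalityI)
  show "length (Pmul m r H piv (bxor u u')) = length (bxor (Pmul m r H piv u) (Pmul m r H piv u'))" by simp
  fix i assume "i < length (Pmul m r H piv (bxor u u'))"
  hence i: "i < m" by simp
  have rm: "r \<le> m" using piv_props by simp
  have "sg (Pmul m r H piv (bxor u u') ! i) = sg (Pmul m r H piv u ! i) * sg (Pmul m r H piv u' ! i)"
  proof -
    have a: "(\<Prod>j<r. sg (H i j \<and> bxor u u' ! j)) = (\<Prod>j<r. sg (H i j \<and> u ! j)) * (\<Prod>j<r. sg (H i j \<and> u' ! j))"
      unfolding prod.distrib[symmetric] by (rule prod.cong) (use u rm in \<open>auto simp: sg_and_xor[symmetric]\<close>)
    have b: "(\<Prod>k<m-r. sg (nonpiv m piv ! k = i \<and> bxor u u' ! (r + k))) = (\<Prod>k<m-r. sg (nonpiv m piv ! k = i \<and> u ! (r + k))) * (\<Prod>k<m-r. sg (nonpiv m piv ! k = i \<and> u' ! (r + k)))"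
      unfolding prod.distrib[symmetric] by (rule prod.cong) (use u rm in \<open>auto simp: sg_and_xor[symmetric]\<close>)
    show ?thesis unfolding Pmul_sg[OF i] a b by (simp add: algebra_simps)
  qed
  thus "Pmul m r H piv (bxor u u') ! i = bxor (Pmul m r H piv u) (Pmul m r H piv u') ! i"
    using i by (simp add: sg_xor[symmetric] sg_eq)
qed

lemma dot_Pmul: assumes l: "length \<beta> = m" "length u = m"
  shows "(-1::complex) ^ dn m \<beta> (Pmul m r H piv u) =
    (\<Prod>j<r. if u ! j then (-1) ^ dn m \<beta> (colv j) else 1) * (\<Prod>k<m-r. sg (\<beta> ! (nonpiv m piv ! k) \<and> u ! (r + k)))"
proof -
  have "(-1::complex) ^ dn m \<beta> (Pmul m r H piv u) = (\<Prod>i<m. sg (\<beta> ! i \<and> Pmul m r H piv u ! i))"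
    by (rule dn_sg)
  also have "\<dots> = (\<Prod>i<m. (\<Prod>j<r. sg (\<beta> ! i \<and> H i j \<and> u ! j)) * (\<Prod>k<m-r. sg (\<beta> ! i \<and> nonpiv m piv ! k = i \<and> u ! (r + k))))"
  proof (rule prod.cong[OF refl])
    fix i assume "i \<in> {..<m}"
    hence i: "i < m" by simp
    show "sg (\<beta> ! i \<and> Pmul m r H piv u ! i) = (\<Prod>j<r. sg (\<beta> ! i \<and> H i j \<and> u ! j)) * (\<Prod>k<m-r. sg (\<beta> ! i \<and> nonpiv m piv ! k = i \<and> u ! (r + k)))"
    proof (cases "\<beta> ! i")
      case True thus ?thesis using Pmul_sg[OF i, of u] by simp
    next
      case False thus ?thesis by simp
    qed
  qed
  also have "\<dots> = (\<Prod>i<m. \<Prod>j<r. sg (\<beta> ! i \<and> H i j \<and> u ! j)) * (\<Prod>i<m. \<Prod>k<m-r. sg (\<beta> ! i \<and> nonpiv m piv ! k = i \<and> u ! (r + k)))"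
    by (rule prod.distrib)
  also have "(\<Prod>i<m. \<Prod>j<r. sg (\<beta> ! i \<and> H i j \<and> u ! j)) = (\<Prod>j<r. \<Prod>i<m. sg (\<beta> ! i \<and> H i j \<and> u ! j))"
    by (rule prod.swap)
  also have "\<dots> = (\<Prod>j<r. if u ! j then (-1) ^ dn m \<beta> (colv j) else 1)"
  proof (rule prod.cong[OF refl])
    fix j
    show "(\<Prod>i<m. sg (\<beta> ! i \<and> H i j \<and> u ! j)) = (if u ! j then (-1) ^ dn m \<beta> (colv j) else 1)"
      unfolding dn_sg by (cases "u ! j") (auto intro!: prod.cong)
  qed
  also have "(\<Prod>i<m. \<Prod>k<m-r. sg (\<beta> ! i \<and> nonpiv m piv ! k = i \<and> u ! (r + k))) = (\<Prod>k<m-r. \<Prod>i<m. sg (\<beta> ! i \<and> nonpiv m piv ! k = i \<and> u ! (r + k)))"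
    by (rule prod.swap)
  also have "\<dots> = (\<Prod>k<m-r. sg (\<beta> ! (nonpiv m piv ! k) \<and> u ! (r + k)))"
  proof (rule prod.cong[OF refl])
    fix k assume "k \<in> {..<m-r}"
    hence k: "nonpiv m piv ! k < m" using nonpiv_lt by simp
    have "(\<Prod>i<m. sg (\<beta> ! i \<and> nonpiv m piv ! k = i \<and> u ! (r + k))) = (\<Prod>i<m. if nonpiv m piv ! k = i then sg (\<beta> ! (nonpiv m piv ! k) \<and> u ! (r + k)) else 1)"
      by (rule prod.cong) auto
    also have "\<dots> = sg (\<beta> ! (nonpiv m piv ! k) \<and> u ! (r + k))" using k by (simp add: prod.delta)
    finally show "(\<Prod>i<m. sg (\<beta> ! i \<and> nonpiv m piv ! k = i \<and> u ! (r + k))) = sg (\<beta> ! (nonpiv m piv ! k) \<and> u ! (r + k))" .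
  qed
  finally show ?thesis .
qed

definition Gam :: "bool list \<Rightarrow> bool list" where
  "Gam \<beta> = map (\<lambda>l. if l < r then odd (dn m \<beta> (colv l)) else \<beta> ! (nonpiv m piv ! (l - r))) [0..<m]"

lemma Gam_len[simp]: "length (Gam \<beta>) = m" by (simp add: Gam_def)

lemma Gam_dot: assumes l: "length \<beta> = m" "length u = m"
  shows "(-1::complex) ^ dn m \<beta> (Pmul m r H piv u) = (-1) ^ dn m (Gam \<beta>) u"
proof -
  have rm: "r \<le> m" using piv_props by simp
  have "(-1::complex) ^ dn m (Gam \<beta>) u = (\<Prod>l<r + (m - r). sg (Gam \<beta> ! l \<and> u ! l))"
    unfolding dn_sg using rm by simp
  also have "\<dots> = (\<Prod>l<r. sg (Gam \<beta> ! l \<and> u ! l)) * (\<Prod>k<m-r. sg (Gam \<beta> ! (r + k) \<and> u ! (r + k)))"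
    by (rule prod_split_nat)
  also have "(\<Prod>l<r. sg (Gam \<beta> ! l \<and> u ! l)) = (\<Prod>j<r. if u ! j then (-1) ^ dn m \<beta> (colv j) else 1)"
    using rm by (intro prod.cong) (auto simp: Gam_def sg_def)
  also have "(\<Prod>k<m-r. sg (Gam \<beta> ! (r + k) \<and> u ! (r + k))) = (\<Prod>k<m-r. sg (\<beta> ! (nonpiv m piv ! k) \<and> u ! (r + k)))"
    by (intro prod.cong) (auto simp: Gam_def)
  finally show ?thesis using dot_Pmul[OF l] by simp
qed

lemma Gam_inj: assumes l: "length \<beta> = m" "length \<beta>' = m" and eq: "Gam \<beta> = Gam \<beta>'"
  shows "\<beta> = \<beta>'"
proof (rule nth_equalityI)
  show "length \<beta> = length \<beta>'" using l by simp
  fix i assume "i < length \<beta>"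
  hence i: "i < m" using l by simp
  have "(-1::complex) ^ dn m \<beta> (ev m i) = (-1) ^ dn m \<beta>' (ev m i)"
  proof -
    have p: "ev m i = Pmul m r H piv (Pinv m r H piv (ev m i))" using Pmul_Pinv by simp
    have "(-1::complex) ^ dn m \<beta> (ev m i) = (-1) ^ dn m (Gam \<beta>) (Pinv m r H piv (ev m i))"
      by (subst p, rule Gam_dot[OF l(1)]) (simp add: Pinv_len)
    also have "\<dots> = (-1) ^ dn m \<beta>' (ev m i)"
      unfolding eq by (subst p, rule Gam_dot[OF l(2), symmetric]) (simp add: Pinv_len)
    finally show ?thesis .
  qed
  thus "\<beta> ! i = \<beta>' ! i" using i by (cases "\<beta> ! i"; cases "\<beta>' ! i") (auto simp: dn_ev)
qed

lemma Gam_surj: assumes g: "length \<gamma> = m"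
  shows "\<exists>\<beta>. length \<beta> = m \<and> (\<forall>u. length u = m \<longrightarrow> (-1::complex) ^ dn m \<beta> (Pmul m r H piv u) = (-1) ^ dn m \<gamma> u)"
proof -
  have inj: "inj_on Gam (bvecs m)" by (rule inj_onI) (use Gam_inj in auto)
  have sub: "Gam ` bvecs m \<subseteq> bvecs m" by auto
  have "card (Gam ` bvecs m) = card (bvecs m)" by (rule card_image[OF inj])
  hence "Gam ` bvecs m = bvecs m" using card_subset_eq[OF bvecs_finite sub] by simp
  hence "\<gamma> \<in> Gam ` bvecs m" using g by simp
  then obtain \<beta> where "\<beta> \<in> bvecs m" "\<gamma> = Gam \<beta>" by blast
  thus ?thesis using Gam_dot by auto
qed

lemma colv_Pmul: "j < r \<Longrightarrow> Pmul m r H piv (ev m j) = colv j"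
proof (rule nth_equalityI)
  assume j: "j < r"
  have rm: "r \<le> m" using piv_props by simp
  show "length (Pmul m r H piv (ev m j)) = length (colv j)" by simp
  fix i assume "i < length (Pmul m r H piv (ev m j))"
  hence i: "i < m" by simp
  have "sg (Pmul m r H piv (ev m j) ! i) = sg (colv j ! i)"
  proof -
    have a: "(\<Prod>l<r. sg (H i l \<and> ev m j ! l)) = (\<Prod>l<r. if l = j then sg (H i j) else 1)"
      using rm by (intro prod.cong) auto
    have b: "(\<Prod>k<m-r. sg (nonpiv m piv ! k = i \<and> ev m j ! (r + k))) = 1"
      using rm j by (intro prod.neutral) auto
    show ?thesis unfolding Pmul_sg[OF i] a b using j i by (simp add: prod.delta)
  qed
  thus "Pmul m r H piv (ev m j) ! i = colv j ! i" by (simp add: sg_eq)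
qed

lemma Pmul_flip: assumes j: "j < r" and u: "length u = m"
  shows "Pmul m r H piv (u[j := \<not> u ! j]) = bxor (Pmul m r H piv u) (colv j)"
proof -
  have rm: "r \<le> m" using piv_props by simp
  have "u[j := \<not> u ! j] = bxor u (ev m j)" using u j rm
    by (auto simp: list_eq_iff_nth_eq nth_list_update)
  thus ?thesis using Pmul_xor[OF u, of "ev m j"] colv_Pmul[OF j] by simp
qed

end


lemma ex_inv4: "\<exists>k'<4. (n + k') mod 4 = (0::nat)"
proof -
  have e: "\<And>k. (n + k) mod 4 = (n mod 4 + k) mod 4" by (simp add: mod_add_left_eq)
  have "n mod 4 < 4" by simp
  hence "n mod 4 = 0 \<or> n mod 4 = 1 \<or> n mod 4 = 2 \<or> n mod 4 = 3" by auto
  thus ?thesis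
  proof (elim disjE)
    assume h: "n mod 4 = 0" show ?thesis by (rule exI[of _ 0]) (simp only: e h, simp)
  next
    assume h: "n mod 4 = 1" show ?thesis by (rule exI[of _ 3]) (simp only: e h, simp)
  next
    assume h: "n mod 4 = 2" show ?thesis by (rule exI[of _ 2]) (simp only: e h, simp)
  next
    assume h: "n mod 4 = 3" show ?thesis by (rule exI[of _ 1]) (simp only: e h, simp)
  qed
qed

lemma m1_i: "(-1::complex) ^ n = \<i> ^ (2 * n)"
  by (simp add: power_mult)

lemma hw_norm: "(\<lambda>u v. \<i> ^ n * Dmat m a b u v) = hw m (n mod 4) a b"
  unfolding hw_def by (subst i_pow_mod4) simp

lemma mapply_mmul: "mapply m (mmul m A B) \<psi> = mapply m A (mapply m B \<psi>)"
  unfolding mapply_def mmul_def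
  by (auto intro!: ext simp: sum_distrib_left sum_distrib_right mult.assoc intro: sum.swap)

lemma mapply_mid: "\<psi> \<in> cvecs m \<Longrightarrow> mapply m (mid m) \<psi> = \<psi>"
proof (rule ext)
  fix u assume psi: "\<psi> \<in> cvecs m"
  show "mapply m (mid m) \<psi> u = \<psi> u"
  proof (cases "length u = m")
    case True thus ?thesis unfolding mapply_def mid_def
      by (simp add: if_distrib[of "\<lambda>x. x * _"] sum.delta cong: if_cong)
  next
    case False thus ?thesis using psi unfolding mapply_def mid_def cvecs_def by simp
  qed
qed

lemma mid_hw: "mid m = hw m 0 (zv m) (zv m)"
  unfolding hw_def Dmat_zero by simp

lemma hw_in_HW: "length a = m \<Longrightarrow> length b = m \<Longrightarrow> k < 4 \<Longrightarrow> hw m k a b \<in> HW m"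
  unfolding HW_alt by blast

lemma mid_HW: "mid m \<in> HW m" unfolding mid_hw by (rule hw_in_HW) auto

lemma mmul_hw_HW: assumes "length a = m" "length b = m" "length a' = m" "length b' = m"
  shows "mmul m (hw m k a b) (hw m k' a' b') = hw m ((k + k' + 2 * dn m b a') mod 4) (bxor a a') (bxor b b')"
  unfolding mmul_hw[OF assms] m1_i power_add[symmetric] hw_norm[symmetric] by simp

lemma stab_group_of: assumes psi: "\<psi> \<in> cvecs m" "\<psi> \<noteq> (\<lambda>_. 0)"
  shows "stabilizer_group m {E \<in> HW m. mapply m E \<psi> = \<psi>}"
proof -
  let ?S = "{E \<in> HW m. mapply m E \<psi> = \<psi>}"
  have clos: "mmul m E F \<in> ?S" if E: "E \<in> ?S" and F: "F \<in> ?S" for E F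
  proof -
    obtain k a b where Ed: "E = hw m k a b" "length a = m" "length b = m" using E HW_alt by auto
    obtain k' a' b' where Fd: "F = hw m k' a' b'" "length a' = m" "length b' = m" using F HW_alt by auto
    have "mmul m E F \<in> HW m" unfolding Ed(1) Fd(1) mmul_hw_HW[OF Ed(2,3) Fd(2,3)]
      by (rule hw_in_HW) (use Ed Fd in auto)
    moreover have "mapply m (mmul m E F) \<psi> = \<psi>" unfolding mapply_mmul using E F by simp
    ultimately show ?thesis by simp
  qed
  have inv: "\<exists>F\<in>?S. mmul m E F = mid m \<and> mmul m F E = mid m" if E: "E \<in> ?S" for E
  proof -
    obtain k a b where Ed: "E = hw m k a b" "length a = m" "length b = m" using E HW_alt by auto
    from ex_inv4[of "k + 2 * dn m b a"] obtain k' where k': "k' < 4" "(k + 2 * dn m b a + k') mod 4 = 0"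
      by (elim exE conjE)
    define F where "F = hw m k' a b"
    have ek: "(k + k' + 2 * dn m b a) mod 4 = 0" using k'(2) by (simp only: ac_simps)
    have zz: "bxor a a = zv m" "bxor b b = zv m" using Ed by simp_all
    have EF: "mmul m E F = mid m"
    proof -
      have "mmul m E F = hw m ((k + k' + 2 * dn m b a) mod 4) (bxor a a) (bxor b b)"
        unfolding Ed(1) F_def by (rule mmul_hw_HW[OF Ed(2,3) Ed(2,3)])
      thus ?thesis unfolding ek zz mid_hw .
    qed
    have FE: "mmul m F E = mid m"
    proof -
      have "mmul m F E = hw m ((k' + k + 2 * dn m b a) mod 4) (bxor a a) (bxor b b)"
        unfolding Ed(1) F_def by (rule mmul_hw_HW[OF Ed(2,3) Ed(2,3)])
      moreover have "k' + k + 2 * dn m b a = k + k' + 2 * dn m b a" by simp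
      ultimately show ?thesis unfolding zz mid_hw using ek by simp
    qed
    have "F \<in> HW m" unfolding F_def by (rule hw_in_HW) (use Ed k' in auto)
    moreover have "mapply m F \<psi> = \<psi>"
    proof -
      have "mapply m F \<psi> = mapply m F (mapply m E \<psi>)" using E by simp
      also have "\<dots> = \<psi>" unfolding mapply_mmul[symmetric] FE using mapply_mid[OF psi(1)] .
      finally show ?thesis .
    qed
    ultimately have "F \<in> ?S" by simp
    thus ?thesis using EF FE by blast
  qed
  have comm: "mmul m E F = mmul m F E" if E: "E \<in> ?S" and F: "F \<in> ?S" for E F
  proof -
    obtain k a b where Ed: "E = hw m k a b" "length a = m" "length b = m" "k < 4" using E HW_alt by auto
    obtain k' a' b' where Fd: "F = hw m k' a' b'" "length a' = m" "length b' = m" "k' < 4" using F HW_alt by auto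
    have e1: "mmul m E F = (\<lambda>u v. (\<i> ^ (k + k') * (-1) ^ dn m b a') * Dmat m (bxor a a') (bxor b b') u v)"
      unfolding Ed(1) Fd(1) by (rule mmul_hw) (use Ed Fd in auto)
    have e2: "mmul m F E = (\<lambda>u v. (\<i> ^ (k + k') * (-1) ^ dn m b' a) * Dmat m (bxor a a') (bxor b b') u v)"
      unfolding Ed(1) Fd(1) mmul_hw[OF Fd(2,3) Ed(2,3)] by (simp add: bxor_comm[of a' a] bxor_comm[of b' b] add.commute)
    show ?thesis
    proof (cases "even (dn m b a') = even (dn m b' a)")
      case True
      hence "(-1::complex) ^ dn m b a' = (-1) ^ dn m b' a" by (simp add: minus_one_power_iff)
      thus ?thesis unfolding e1 e2 by simp
    next
      case False
      hence neg: "(-1::complex) ^ dn m b a' = - ((-1) ^ dn m b' a)" by (simp add: minus_one_power_iff)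
      have "mmul m E F = (\<lambda>u v. (-1) * mmul m F E u v)" unfolding e1 e2 neg by (auto intro!: ext)
      hence "mapply m (mmul m E F) \<psi> = (\<lambda>u. - mapply m (mmul m F E) \<psi> u)"
        by (simp add: mapply_def sum_negf)
      hence "\<psi> = (\<lambda>u. - \<psi> u)" unfolding mapply_mmul using E F by simp
      hence "\<psi> = (\<lambda>_. 0)" by (auto simp: fun_eq_iff eq_neg_iff_add_eq_0)
      thus ?thesis using psi(2) by simp
    qed
  qed
  have negI: "(\<lambda>u v. - mid m u v) \<notin> ?S"
  proof
    assume "(\<lambda>u v. - mid m u v) \<in> ?S"
    hence h1: "mapply m (\<lambda>u v. - mid m u v) \<psi> = \<psi>" by simp
    have "mapply m (\<lambda>u v. - mid m u v) \<psi> = (\<lambda>u. - mapply m (mid m) \<psi> u)" by (simp add: mapply_def sum_negf)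
    hence "(\<lambda>u. - \<psi> u) = \<psi>" using h1 mapply_mid[OF psi(1)] by simp
    hence "\<psi> = (\<lambda>_. 0)" by (auto simp: fun_eq_iff eq_neg_iff_add_eq_0)
    thus False using psi(2) by simp
  qed
  have "mid m \<in> ?S" using mid_HW mapply_mid[OF psi(1)] by simp
  moreover have "?S \<subseteq> HW m" by blast
  ultimately show ?thesis unfolding stabilizer_group_def
    using clos inv comm negI by blast
qed


definition ipow :: "int \<Rightarrow> complex" where "ipow z = \<i> ^ nat (z mod 4)"

lemma ipow_eq: assumes "int n mod 4 = z mod 4" shows "ipow z = \<i> ^ n"
proof -
  have "int (n mod 4) = int n mod 4" by (simp add: zmod_int)
  hence "n mod 4 = nat (z mod 4)" using assms by linarith
  thus ?thesis unfolding ipow_def using i_pow_mod4[of n] by simp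
qed

lemma ipow_of_nat: "ipow (int n) = \<i> ^ n" by (rule ipow_eq) simp

lemma ipow_add: "ipow (a + b) = ipow a * ipow b"
proof -
  have "int (nat (a mod 4) + nat (b mod 4)) = a mod 4 + b mod 4" by simp
  hence "int (nat (a mod 4) + nat (b mod 4)) mod 4 = (a + b) mod 4" by (simp add: mod_add_eq)
  hence "ipow (a + b) = \<i> ^ (nat (a mod 4) + nat (b mod 4))" by (rule ipow_eq)
  thus ?thesis unfolding ipow_def by (simp add: power_add)
qed

lemma ipow_4: "ipow (4 * z) = 1" unfolding ipow_def by simp

lemma ipow_2: "ipow (2 * int n) = (-1) ^ n"
proof -
  have "ipow (2 * int n) = ipow (int (2 * n))" by simp
  also have "\<dots> = \<i> ^ (2 * n)" by (rule ipow_of_nat)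
  finally show ?thesis by (simp add: power_mult)
qed

lemma ipow_cong: "a mod 4 = b mod 4 \<Longrightarrow> ipow a = ipow b" unfolding ipow_def by simp

definition qfi :: "nat \<Rightarrow> (nat \<Rightarrow> nat \<Rightarrow> bool) \<Rightarrow> bool list \<Rightarrow> int" where
  "qfi r S x = (\<Sum>j<r. \<Sum>k<r. of_bool (x ! j) * of_bool (S j k) * of_bool (x ! k))"

definition Bi :: "nat \<Rightarrow> (nat \<Rightarrow> nat \<Rightarrow> bool) \<Rightarrow> bool list \<Rightarrow> bool list \<Rightarrow> int" where
  "Bi r S x y = (\<Sum>j<r. \<Sum>k<r. of_bool (x ! j) * of_bool (S j k) * of_bool (y ! k))"

lemma quad_alg:
  fixes X Y :: "nat \<Rightarrow> int" and s :: "nat \<Rightarrow> nat \<Rightarrow> int"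
  assumes sym: "\<And>j k. j < r \<Longrightarrow> k < r \<Longrightarrow> s j k = s k j"
  shows "(\<Sum>j<r. \<Sum>k<r. (X j + Y j - 2 * X j * Y j) * s j k * (X k + Y k - 2 * X k * Y k)) =
    (\<Sum>j<r. \<Sum>k<r. X j * s j k * X k) + (\<Sum>j<r. \<Sum>k<r. Y j * s j k * Y k) + 2 * (\<Sum>j<r. \<Sum>k<r. X j * s j k * Y k)
    + 4 * ((\<Sum>j<r. \<Sum>k<r. X j * Y j * s j k * X k * Y k) - (\<Sum>j<r. \<Sum>k<r. X j * Y j * s j k * (X k + Y k)))"
proof -
  have pt: "\<And>j k. (X j + Y j - 2 * X j * Y j) * s j k * (X k + Y k - 2 * X k * Y k) =
     X j * s j k * X k + Y j * s j k * Y k + X j * s j k * Y k + Y j * s j k * X k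
     - 2 * (X j * Y j * s j k * (X k + Y k)) - 2 * ((X j + Y j) * s j k * (X k * Y k)) + 4 * (X j * Y j * s j k * X k * Y k)"
    by (simp add: algebra_simps)
  have sw1: "(\<Sum>j<r. \<Sum>k<r. Y j * s j k * X k) = (\<Sum>j<r. \<Sum>k<r. X j * s j k * Y k)"
  proof -
    have "(\<Sum>j<r. \<Sum>k<r. Y j * s j k * X k) = (\<Sum>k<r. \<Sum>j<r. Y j * s j k * X k)" by (rule sum.swap)
    also have "\<dots> = (\<Sum>k<r. \<Sum>j<r. X k * s k j * Y j)" using sym by (intro sum.cong) (auto simp: mult.commute)
    finally show ?thesis .
  qed
  have sw2: "(\<Sum>j<r. \<Sum>k<r. (X j + Y j) * s j k * (X k * Y k)) = (\<Sum>j<r. \<Sum>k<r. X j * Y j * s j k * (X k + Y k))"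
  proof -
    have "(\<Sum>j<r. \<Sum>k<r. (X j + Y j) * s j k * (X k * Y k)) = (\<Sum>k<r. \<Sum>j<r. (X j + Y j) * s j k * (X k * Y k))" by (rule sum.swap)
    also have "\<dots> = (\<Sum>k<r. \<Sum>j<r. X k * Y k * s k j * (X j + Y j))" using sym by (intro sum.cong) (auto simp: mult.commute)
    finally show ?thesis .
  qed
  have "(\<Sum>j<r. \<Sum>k<r. (X j + Y j - 2 * X j * Y j) * s j k * (X k + Y k - 2 * X k * Y k)) =
    (\<Sum>j<r. \<Sum>k<r. X j * s j k * X k) + (\<Sum>j<r. \<Sum>k<r. Y j * s j k * Y k) + (\<Sum>j<r. \<Sum>k<r. X j * s j k * Y k)
    + (\<Sum>j<r. \<Sum>k<r. Y j * s j k * X k) - 2 * (\<Sum>j<r. \<Sum>k<r. X j * Y j * s j k * (X k + Y k))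
    - 2 * (\<Sum>j<r. \<Sum>k<r. (X j + Y j) * s j k * (X k * Y k)) + 4 * (\<Sum>j<r. \<Sum>k<r. X j * Y j * s j k * X k * Y k)"
    unfolding pt by (simp only: sum.distrib sum_subtractf sum_distrib_left[symmetric])
  thus ?thesis unfolding sw1 sw2 by simp
qed

definition qfn :: "nat \<Rightarrow> (nat \<Rightarrow> nat \<Rightarrow> bool) \<Rightarrow> bool list \<Rightarrow> nat" where
  "qfn r S x = (\<Sum>j<r. \<Sum>k<r. of_bool (x ! j) * of_bool (S j k) * of_bool (x ! k))"

definition Bn :: "nat \<Rightarrow> (nat \<Rightarrow> nat \<Rightarrow> bool) \<Rightarrow> bool list \<Rightarrow> bool list \<Rightarrow> nat" where
  "Bn r S x y = (\<Sum>j<r. \<Sum>k<r. of_bool (x ! j) * of_bool (S j k) * of_bool (y ! k))"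

lemma qfn_int: "int (qfn r S x) = qfi r S x"
  unfolding qfn_def qfi_def by (simp add: of_nat_sum)

lemma Bn_int: "int (Bn r S x y) = Bi r S x y"
  unfolding Bn_def Bi_def by (simp add: of_nat_sum)

lemma qfi_xor: assumes sym: "sym_bin r S" and l: "r \<le> length x" "r \<le> length y"
  shows "\<exists>D. qfi r S (bxor x y) = qfi r S x + qfi r S y + 2 * Bi r S x y + 4 * D"
proof -
  define X where "X = (\<lambda>j. of_bool (x ! j) :: int)"
  define Y where "Y = (\<lambda>j. of_bool (y ! j) :: int)"
  define s where "s = (\<lambda>j k. of_bool (S j k) :: int)"
  have "qfi r S (bxor x y) = (\<Sum>j<r. \<Sum>k<r. (X j + Y j - 2 * X j * Y j) * s j k * (X k + Y k - 2 * X k * Y k))"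
    unfolding qfi_def X_def Y_def s_def using l by (intro sum.cong refl) (auto simp: of_bool_def)
  also have "\<dots> = qfi r S x + qfi r S y + 2 * Bi r S x y + 4 * ((\<Sum>j<r. \<Sum>k<r. X j * Y j * s j k * X k * Y k) - (\<Sum>j<r. \<Sum>k<r. X j * Y j * s j k * (X k + Y k)))"
    unfolding qfi_def Bi_def X_def Y_def s_def
    by (rule quad_alg) (use sym in \<open>auto simp: sym_bin_def\<close>)
  finally show ?thesis by blast
qed

lemma i_qfn_xor: assumes sym: "sym_bin r S" and l: "r \<le> length x" "r \<le> length y"
  shows "\<i> ^ qfn r S (bxor x y) = \<i> ^ qfn r S x * \<i> ^ qfn r S y * (-1) ^ Bn r S x y"
proof -
  obtain D where D: "qfi r S (bxor x y) = qfi r S x + qfi r S y + 2 * Bi r S x y + 4 * D"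
    using qfi_xor[OF assms] by blast
  have "\<i> ^ qfn r S (bxor x y) = ipow (qfi r S (bxor x y))" unfolding qfn_int[symmetric] ipow_of_nat ..
  also have "\<dots> = ipow (qfi r S x) * ipow (qfi r S y) * ipow (2 * Bi r S x y) * ipow (4 * D)"
    unfolding D ipow_add ..
  also have "\<dots> = \<i> ^ qfn r S x * \<i> ^ qfn r S y * (-1) ^ Bn r S x y"
    unfolding qfn_int[symmetric] Bn_int[symmetric] ipow_of_nat ipow_2 ipow_4 by simp
  finally show ?thesis .
qed

lemma Bn_sg: "(-1::complex) ^ Bn r S x y = (\<Prod>j<r. sg (x ! j \<and> odd (\<Sum>k<r. of_bool (S j k \<and> y ! k) :: nat)))"
proof -
  have "(-1::complex) ^ Bn r S x y = (\<Prod>j<r. (-1) ^ (\<Sum>k<r. of_bool (x ! j) * of_bool (S j k) * of_bool (y ! k)))"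
    unfolding Bn_def power_sum ..
  also have "\<dots> = (\<Prod>j<r. sg (x ! j \<and> odd (\<Sum>k<r. of_bool (S j k \<and> y ! k) :: nat)))"
  proof (rule prod.cong[OF refl])
    fix j
    show "(-1::complex) ^ (\<Sum>k<r. of_bool (x ! j) * of_bool (S j k) * of_bool (y ! k)) = sg (x ! j \<and> odd (\<Sum>k<r. of_bool (S j k \<and> y ! k) :: nat))"
    proof (cases "x ! j")
      case True
      have "(\<Sum>k<r. of_bool (x ! j) * of_bool (S j k) * of_bool (y ! k)) = (\<Sum>k<r. of_bool (S j k \<and> y ! k) :: nat)"
        using True by (intro sum.cong refl) simp
      thus ?thesis using True sg_odd by simp
    next
      case False thus ?thesis by simp
    qed
  qed
  finally show ?thesis .
qed


lemma prod_of_bool_int: "finite A \<Longrightarrow> (\<Prod>i\<in>A. (of_bool (P i) :: int)) = of_bool (\<forall>i\<in>A. P i)"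
  by (induction A rule: finite_induct) auto

lemma of_bool_mult_nat: "(of_bool p :: nat) * of_bool q = of_bool (p \<and> q)" by simp

lemma card_filter_sum: "finite A \<Longrightarrow> card {x\<in>A. P x} = (\<Sum>x\<in>A. (of_bool (P x) :: nat))"
proof -
  assume fin: "finite A"
  have "card {x\<in>A. P x} = (\<Sum>x\<in>{x\<in>A. P x}. 1)" by (rule card_eq_sum)
  also have "\<dots> = (\<Sum>x\<in>A. if P x then 1 else 0)" by (rule sum.inter_filter[OF fin])
  finally show ?thesis by (simp add: of_bool_def)
qed

lemma card_filter_sum_real: "finite A \<Longrightarrow> real (card {x\<in>A. P x}) = (\<Sum>x\<in>A. (of_bool (P x) :: real))"
  by (simp add: card_filter_sum of_nat_sum)

locale bsL = crf +
  fixes S :: "nat \<Rightarrow> nat \<Rightarrow> bool" and b :: "bool list"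
  assumes sym: "sym_bin r S" and bl: "length b = m"
begin

lemma rm: "r \<le> m" using piv_props by simp

definition c0 :: complex where "c0 = complex_of_real (1 / sqrt (2 ^ r))"
definition w :: "bool list \<Rightarrow> complex" where "w = bssc m r H piv S b"
definition supp :: "bool list \<Rightarrow> bool" where "supp u \<longleftrightarrow> (\<forall>i\<in>{r..<m}. b ! i = u ! i)"
definition W :: "bool list \<Rightarrow> complex" where
  "W u = c0 * \<i> ^ qfn r S u * (-1) ^ dn m b u * of_bool (supp u)"

lemma ffun_supp: "ffun m b u r = of_bool (supp u)"
proof -
  have "ffun m b u r = (\<Prod>i\<in>{r..<m}. (of_bool (b ! i = u ! i) :: int))"
    unfolding ffun_def by (intro prod.cong refl) auto
  thus ?thesis unfolding supp_def by (simp add: prod_of_bool_int)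
qed

lemma w_Pmul: assumes u: "length u = m" shows "w (Pmul m r H piv u) = W u"
proof -
  have lin: "(\<Sum>i<m. of_bool (b ! i) * of_bool (u ! i)) = dn m b u"
    unfolding dn_def by (intro sum.cong refl) simp
  have "w (Pmul m r H piv u) = c0 * \<i> ^ (qfn r S u + 2 * dn m b u) * of_int (ffun m b u r)"
    unfolding w_def bssc_def Let_def Pinv_Pmul[OF u] c0_def qfn_def lin[symmetric] by simp
  thus ?thesis unfolding W_def ffun_supp power_add m1_i by simp
qed

lemma w_off: "length a \<noteq> m \<Longrightarrow> w a = 0" unfolding w_def bssc_def by simp

lemma w_cvecs: "w \<in> cvecs m" unfolding cvecs_def using w_off by auto

lemma Pmul_bij: "bij_betw (Pmul m r H piv) (bvecs m) (bvecs m)"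
proof (rule bij_betw_imageI)
  show "inj_on (Pmul m r H piv) (bvecs m)" by (rule inj_onI) (use Pmul_inj in auto)
  show "Pmul m r H piv ` bvecs m = bvecs m"
  proof
    show "Pmul m r H piv ` bvecs m \<subseteq> bvecs m" by auto
    show "bvecs m \<subseteq> Pmul m r H piv ` bvecs m"
    proof
      fix a assume "a \<in> bvecs m"
      hence "a = Pmul m r H piv (Pinv m r H piv a)" "Pinv m r H piv a \<in> bvecs m"
        using Pmul_Pinv Pinv_len by auto
      thus "a \<in> Pmul m r H piv ` bvecs m" by blast
    qed
  qed
qed

lemma card_supp: "card {u \<in> bvecs m. supp u} = 2 ^ r"
proof -
  have "bij_betw (\<lambda>y. y @ drop r b) (bvecs r) {u \<in> bvecs m. supp u}"
  proof (rule bij_betw_imageI)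
    show "inj_on (\<lambda>y. y @ drop r b) (bvecs r)" by (rule inj_onI) simp
    show "(\<lambda>y. y @ drop r b) ` bvecs r = {u \<in> bvecs m. supp u}"
    proof
      show "(\<lambda>y. y @ drop r b) ` bvecs r \<subseteq> {u \<in> bvecs m. supp u}"
        using bl rm by (auto simp: supp_def nth_append)
      show "{u \<in> bvecs m. supp u} \<subseteq> (\<lambda>y. y @ drop r b) ` bvecs r"
      proof
        fix u assume u: "u \<in> {u \<in> bvecs m. supp u}"
        have "drop r u = drop r b" using u bl rm by (auto simp: supp_def list_eq_iff_nth_eq)
        hence "u = take r u @ drop r b" by (metis append_take_drop_id)
        moreover have "take r u \<in> bvecs r" using u rm by simp
        ultimately show "u \<in> (\<lambda>y. y @ drop r b) ` bvecs r" by blast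
      qed
    qed
  qed
  thus ?thesis using bij_betw_same_card bvecs_card by metis
qed

lemma cnorm2_w: "cnorm2 m w = 1"
proof -
  have "cnorm2 m w = (\<Sum>u\<in>bvecs m. (cmod (w (Pmul m r H piv u)))\<^sup>2)"
    unfolding cnorm2_def using sum.reindex_bij_betw[OF Pmul_bij, of "\<lambda>a. (cmod (w a))\<^sup>2"] by simp
  also have "\<dots> = (\<Sum>u\<in>bvecs m. (1 / 2 ^ r) * of_bool (supp u))"
  proof (rule sum.cong[OF refl])
    fix u assume "u \<in> bvecs m"
    hence "w (Pmul m r H piv u) = W u" using w_Pmul by simp
    moreover have "(cmod c0)\<^sup>2 = 1 / 2 ^ r"
    proof -
      have "cmod c0 = \<bar>1 / sqrt (2 ^ r)\<bar>" unfolding c0_def by (rule norm_of_real)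
      thus ?thesis by (simp add: power_divide)
    qed
    ultimately show "(cmod (w (Pmul m r H piv u)))\<^sup>2 = (1 / 2 ^ r) * of_bool (supp u)"
      unfolding W_def by (simp add: norm_mult norm_power power_mult_distrib)
  qed
  also have "\<dots> = (1 / 2 ^ r) * (\<Sum>u\<in>bvecs m. of_bool (supp u))"
    by (rule sum_distrib_left[symmetric])
  also have "\<dots> = (1 / 2 ^ r) * card {u \<in> bvecs m. supp u}"
    using card_filter_sum_real[OF bvecs_finite, of m supp] by simp
  also have "\<dots> = 1" unfolding card_supp by simp
  finally show ?thesis .
qed

lemma w_nonzero: "w \<noteq> (\<lambda>_. 0)"
  using cnorm2_w unfolding cnorm2_def by auto

end


context bsL begin

definition ym :: "bool list \<Rightarrow> bool list" where "ym y = y @ zv (m - r)"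
definition gam :: "bool list \<Rightarrow> bool list \<Rightarrow> bool list" where
  "gam y t = map (\<lambda>i. if i < r then odd (\<Sum>k<r. of_bool (S i k \<and> y ! k) :: nat) else t ! (i - r)) [0..<m]"
definition bmask :: "bool list" where "bmask = map (\<lambda>i. r \<le> i \<and> b ! i) [0..<m]"
definition bet :: "bool list \<Rightarrow> bool list \<Rightarrow> bool list" where
  "bet y t = (SOME \<beta>. length \<beta> = m \<and> (\<forall>u. length u = m \<longrightarrow> (-1::complex) ^ dn m \<beta> (Pmul m r H piv u) = (-1) ^ dn m (gam y t) u))"
definition nn :: "bool list \<Rightarrow> bool list \<Rightarrow> nat" where
  "nn y t = qfn r S (ym y) + 2 * dn m (gam y t) (ym y) + 2 * dn m (gam y t) bmask + 2 * dn m b (ym y)"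
definition kk :: "bool list \<Rightarrow> bool list \<Rightarrow> nat" where
  "kk y t = (SOME k. k < 4 \<and> (nn y t + k) mod 4 = 0)"
definition Eyt :: "bool list \<Rightarrow> bool list \<Rightarrow> cmat" where
  "Eyt y t = hw m (kk y t) (Pmul m r H piv (ym y)) (bet y t)"

lemma ym_len[simp]: "length y = r \<Longrightarrow> length (ym y) = m" using rm by (simp add: ym_def)
lemma ym_nth_lo: "length y = r \<Longrightarrow> k < r \<Longrightarrow> ym y ! k = y ! k" by (simp add: ym_def nth_append)
lemma ym_nth_hi: "length y = r \<Longrightarrow> r \<le> k \<Longrightarrow> k < m \<Longrightarrow> ym y ! k = False" by (simp add: ym_def nth_append)
lemma gam_len[simp]: "length (gam y t) = m" by (simp add: gam_def)
lemma bmask_len[simp]: "length bmask = m" by (simp add: bmask_def)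

lemma bet_props: "length (bet y t) = m \<and> (\<forall>u. length u = m \<longrightarrow> (-1::complex) ^ dn m (bet y t) (Pmul m r H piv u) = (-1) ^ dn m (gam y t) u)"
  unfolding bet_def by (rule someI_ex) (rule Gam_surj, simp)

lemma kk_props: "kk y t < 4 \<and> (nn y t + kk y t) mod 4 = 0"
  unfolding kk_def by (rule someI_ex) (rule ex_inv4)

lemma gam_split: assumes y: "length y = r" and u: "length u = m" "supp u"
  shows "(-1::complex) ^ dn m (gam y t) u = (-1) ^ Bn r S u (ym y) * (-1) ^ dn m (gam y t) bmask"
proof -
  have mm: "m = r + (m - r)" using rm by simp
  have "(-1::complex) ^ dn m (gam y t) u = (\<Prod>i<r + (m - r). sg (gam y t ! i \<and> u ! i))"
    unfolding dn_sg using mm by simp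
  also have "\<dots> = (\<Prod>i<r. sg (gam y t ! i \<and> u ! i)) * (\<Prod>k<m - r. sg (gam y t ! (r + k) \<and> u ! (r + k)))"
    by (rule prod_split_nat)
  also have "(\<Prod>i<r. sg (gam y t ! i \<and> u ! i)) = (-1) ^ Bn r S u (ym y)"
    unfolding Bn_sg using rm y by (intro prod.cong refl) (auto simp: gam_def ym_nth_lo conj_commute)
  also have "(\<Prod>k<m - r. sg (gam y t ! (r + k) \<and> u ! (r + k))) = (\<Prod>k<m - r. sg (gam y t ! (r + k) \<and> bmask ! (r + k)))"
    using u(2) unfolding supp_def by (intro prod.cong refl) (auto simp: bmask_def)
  also have "\<dots> = (-1) ^ dn m (gam y t) bmask"
  proof -
    have "(-1::complex) ^ dn m (gam y t) bmask = (\<Prod>i<r + (m - r). sg (gam y t ! i \<and> bmask ! i))"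
      unfolding dn_sg using mm by simp
    also have "\<dots> = (\<Prod>i<r. sg (gam y t ! i \<and> bmask ! i)) * (\<Prod>k<m - r. sg (gam y t ! (r + k) \<and> bmask ! (r + k)))"
      by (rule prod_split_nat)
    also have "(\<Prod>i<r. sg (gam y t ! i \<and> bmask ! i)) = 1"
      using rm by (intro prod.neutral) (auto simp: bmask_def)
    finally show ?thesis by simp
  qed
  finally show ?thesis .
qed

lemma supp_xor: assumes y: "length y = r" and u: "length u = m"
  shows "supp (bxor u (ym y)) = supp u"
  unfolding supp_def using y u rm by (auto simp: ym_nth_hi)

lemma fix_Eyt: assumes y: "length y = r" and t: "length t = m - r" and v: "length v = m"
  shows "mapply m (Eyt y t) w v = w v"
proof -
  define u where "u = Pinv m r H piv v"
  have ul: "length u = m" unfolding u_def using Pinv_len v by simp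
  have vu: "v = Pmul m r H piv u" unfolding u_def using Pmul_Pinv v by simp
  define u' where "u' = bxor u (ym y)"
  have u'l: "length u' = m" unfolding u'_def using ul y by simp
  have xv: "bxor v (Pmul m r H piv (ym y)) = Pmul m r H piv u'"
    unfolding vu u'_def using Pmul_xor[OF ul, of "ym y"] y by simp
  have "mapply m (Eyt y t) w v = \<i> ^ kk y t * (-1) ^ dn m (bet y t) (Pmul m r H piv u') * w (Pmul m r H piv u')"
    unfolding Eyt_def using mapply_hw[OF v, of "Pmul m r H piv (ym y)"] xv by simp
  also have "\<dots> = \<i> ^ kk y t * (-1) ^ dn m (gam y t) u' * W u'"
    using bet_props u'l w_Pmul by simp
  also have "\<dots> = W u"
  proof (cases "supp u")
    case False
    hence "\<not> supp u'" unfolding u'_def using supp_xor y ul by simp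
    thus ?thesis using False unfolding W_def by simp
  next
    case True
    have su': "supp u'" unfolding u'_def using supp_xor y ul True by simp
    have g1: "(-1::complex) ^ dn m (gam y t) u' = (-1) ^ dn m (gam y t) u * (-1) ^ dn m (gam y t) (ym y)"
      unfolding u'_def by (rule dn_xor2) (use ul y in auto)
    have g2: "(-1::complex) ^ dn m (gam y t) u = (-1) ^ Bn r S u (ym y) * (-1) ^ dn m (gam y t) bmask"
      by (rule gam_split[OF y ul True])
    have q: "\<i> ^ qfn r S u' = \<i> ^ qfn r S u * \<i> ^ qfn r S (ym y) * (-1) ^ Bn r S u (ym y)"
      unfolding u'_def by (rule i_qfn_xor[OF sym]) (use ul y rm in auto)
    have d: "(-1::complex) ^ dn m b u' = (-1) ^ dn m b u * (-1) ^ dn m b (ym y)"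
      unfolding u'_def by (rule dn_xor2) (use ul y in auto)
    have k1: "\<i> ^ kk y t * \<i> ^ qfn r S (ym y) * (-1) ^ dn m (gam y t) bmask * (-1) ^ dn m (gam y t) (ym y) * (-1) ^ dn m b (ym y) = 1"
    proof -
      have "\<i> ^ kk y t * \<i> ^ qfn r S (ym y) * (-1) ^ dn m (gam y t) bmask * (-1) ^ dn m (gam y t) (ym y) * (-1) ^ dn m b (ym y)
          = \<i> ^ (nn y t + kk y t)"
        unfolding nn_def m1_i power_add by (simp add: ac_simps)
      also have "\<dots> = \<i> ^ ((nn y t + kk y t) mod 4)" by (rule i_pow_mod4)
      also have "\<dots> = 1" using kk_props by simp
      finally show ?thesis .
    qed
    have bb: "(-1::complex) ^ Bn r S u (ym y) * (-1) ^ Bn r S u (ym y) = 1"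
      by (simp add: power_add[symmetric])
    define A where "A = \<i> ^ kk y t"
    define Q1 where "Q1 = \<i> ^ qfn r S u"
    define Q2 where "Q2 = \<i> ^ qfn r S (ym y)"
    define Bs where "Bs = (-1::complex) ^ Bn r S u (ym y)"
    define G1 where "G1 = (-1::complex) ^ dn m (gam y t) bmask"
    define G2 where "G2 = (-1::complex) ^ dn m (gam y t) (ym y)"
    define D1 where "D1 = (-1::complex) ^ dn m b u"
    define D2 where "D2 = (-1::complex) ^ dn m b (ym y)"
    have "\<i> ^ kk y t * (-1) ^ dn m (gam y t) u' * W u' = A * (Bs * G1 * G2) * (c0 * (Q1 * Q2 * Bs) * (D1 * D2))"
      unfolding W_def g1 g2 q d using su' A_def Q1_def Q2_def Bs_def G1_def G2_def D1_def D2_def by simp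
    also have "\<dots> = (A * Q2 * G1 * G2 * D2) * (Bs * Bs) * (c0 * Q1 * D1)" by (simp only: ac_simps)
    also have "\<dots> = c0 * Q1 * D1" using k1 bb unfolding A_def Q2_def G1_def G2_def D2_def Bs_def by simp
    also have "\<dots> = W u" unfolding W_def Q1_def D1_def using True by simp
    finally show ?thesis .
  qed
  also have "\<dots> = w v" using w_Pmul ul vu by simp
  finally show ?thesis .
qed

definition Stw :: "cmat set" where "Stw = {E \<in> HW m. mapply m E w = w}"

lemma Eyt_in: assumes y: "length y = r" and t: "length t = m - r"
  shows "Eyt y t \<in> Stw"
proof -
  have "Eyt y t \<in> HW m" unfolding Eyt_def
    by (rule hw_in_HW) (use y kk_props bet_props in auto)
  moreover have "mapply m (Eyt y t) w = w"
  proof (rule ext)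
    fix v show "mapply m (Eyt y t) w v = w v"
    proof (cases "length v = m")
      case True thus ?thesis using fix_Eyt[OF y t] by simp
    next
      case False thus ?thesis unfolding Eyt_def using mapply_hw0 w_off by simp
    qed
  qed
  ultimately show ?thesis unfolding Stw_def by simp
qed

lemma Eyt_inj: assumes y: "length y = r" "length y' = r" and t: "length t = m - r" "length t' = m - r"
  and eq: "Eyt y t = Eyt y' t'"
  shows "y = y' \<and> t = t'"
proof -
  have "\<And>u v. \<i> ^ kk y t * Dmat m (Pmul m r H piv (ym y)) (bet y t) u v = \<i> ^ kk y' t' * Dmat m (Pmul m r H piv (ym y')) (bet y' t') u v"
    using eq unfolding Eyt_def hw_def by metis
  from Dmat_inj[OF _ _ _ _ _ this] have a: "Pmul m r H piv (ym y) = Pmul m r H piv (ym y')" and bb: "bet y t = bet y' t'"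
    using y bet_props by auto
  have "ym y = ym y'" using a Pmul_inj y by simp
  hence yy: "y = y'" unfolding ym_def using y by simp
  have gg: "gam y t = gam y' t'"
  proof (rule nth_equalityI)
    show "length (gam y t) = length (gam y' t')" by simp
    fix i assume "i < length (gam y t)"
    hence i: "i < m" by simp
    have "(-1::complex) ^ dn m (gam y t) (ev m i) = (-1) ^ dn m (bet y t) (Pmul m r H piv (ev m i))"
      using bet_props[of y t] by simp
    also have "\<dots> = (-1) ^ dn m (gam y' t') (ev m i)" unfolding bb using bet_props[of y' t'] by simp
    finally have "(-1::complex) ^ dn m (gam y t) (ev m i) = (-1) ^ dn m (gam y' t') (ev m i)" .
    thus "gam y t ! i = gam y' t' ! i" using i
      by (cases "gam y t ! i"; cases "gam y' t' ! i") (auto simp: dn_ev)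
  qed
  have "t = t'"
  proof (rule nth_equalityI)
    show "length t = length t'" using t by simp
    fix k assume "k < length t"
    hence k: "k < m - r" using t by simp
    have "gam y t ! (r + k) = gam y' t' ! (r + k)" using gg by simp
    thus "t ! k = t' ! k" using k by (simp add: gam_def)
  qed
  thus ?thesis using yy by simp
qed

lemma card_Stw_ge: "2 ^ m \<le> card Stw"
proof -
  have fin: "finite Stw" unfolding Stw_def using HW_finite by simp
  have inj: "inj_on (\<lambda>(y, t). Eyt y t) (bvecs r \<times> bvecs (m - r))"
  proof (rule inj_onI)
    fix p q assume p: "p \<in> bvecs r \<times> bvecs (m - r)" and q: "q \<in> bvecs r \<times> bvecs (m - r)"
      and e: "(\<lambda>(y, t). Eyt y t) p = (\<lambda>(y, t). Eyt y t) q"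
    obtain y t where pp: "p = (y, t)" by fastforce
    obtain y' t' where qq: "q = (y', t')" by fastforce
    have "y = y' \<and> t = t'"
      by (rule Eyt_inj) (use p q e pp qq in simp_all)
    thus "p = q" using pp qq by simp
  qed
  have sub: "(\<lambda>(y, t). Eyt y t) ` (bvecs r \<times> bvecs (m - r)) \<subseteq> Stw"
    using Eyt_in by auto
  have "card ((\<lambda>(y, t). Eyt y t) ` (bvecs r \<times> bvecs (m - r))) = 2 ^ r * 2 ^ (m - r)"
    unfolding card_image[OF inj] card_cartesian_product bvecs_card ..
  also have "\<dots> = 2 ^ m" using rm by (simp add: power_add[symmetric])
  finally show ?thesis using card_mono[OF fin sub] by simp
qed

theorem bssc_stabilizer_state: "stabilizer_state m (bssc m r H piv S b)"
proof -
  have G: "stabilizer_group m Stw" unfolding Stw_def by (rule stab_group_of[OF w_cvecs w_nonzero])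
  note P = stab_props[OF G]
  have fixw: "\<And>E. E \<in> Stw \<Longrightarrow> mapply m E w = w" unfolding Stw_def by simp
  have n1: "ip (bvecs m) w w = 1" using cnorm2_w ip_cnorm2 by simp
  have "card Stw \<le> 2 ^ m" by (rule card_bound1[OF P(1,2,4,3) fixw n1])
  hence cS: "card Stw = 2 ^ m" using card_Stw_ge by simp
  have "maximal_stabilizer_group m Stw" unfolding maximal_stabilizer_group_def using G cS by simp
  moreover have "fixed_space m Stw = {(\<lambda>a. c * w a) | c. True}"
    by (rule fixed_space_eq[OF G cS w_cvecs fixw cnorm2_w])
  ultimately show ?thesis unfolding stabilizer_state_def w_def[symmetric] using w_cvecs cnorm2_w by blast
qed

end


definition lc :: "nat \<Rightarrow> nat \<Rightarrow> (nat \<Rightarrow> nat \<Rightarrow> bool) \<Rightarrow> bool list \<Rightarrow> bool list" where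
  "lc m r H y = map (\<lambda>i. odd (card {j. j < r \<and> H i j \<and> y ! j})) [0..<m]"

definition colm :: "nat \<Rightarrow> (nat \<Rightarrow> nat \<Rightarrow> bool) \<Rightarrow> nat \<Rightarrow> bool list" where
  "colm m H j = map (\<lambda>i. H i j) [0..<m]"

definition subsp :: "nat \<Rightarrow> bool list set \<Rightarrow> bool" where
  "subsp m X \<longleftrightarrow> X \<subseteq> bvecs m \<and> zv m \<in> X \<and> (\<forall>a\<in>X. \<forall>b\<in>X. bxor a b \<in> X)"

lemma lc_len[simp]: "length (lc m r H y) = m" by (simp add: lc_def)
lemma colm_len[simp]: "length (colm m H j) = m" by (simp add: colm_def)

lemma sg_bxor: "i < length x \<Longrightarrow> i < length y \<Longrightarrow> sg (bxor x y ! i) = sg (x ! i) * sg (y ! i)"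
  by (simp add: sg_def)

lemma lc_sg: "i < m \<Longrightarrow> sg (lc m r H y ! i) = (\<Prod>j<r. sg (H i j \<and> y ! j))"
  by (simp add: lc_def sg_odd card_lt_sg)

lemma lc_Suc: "lc m (Suc r) H y = bxor (lc m r H y) (if y ! r then colm m H r else zv m)"
proof (rule nth_equalityI)
  show "length (lc m (Suc r) H y) = length (bxor (lc m r H y) (if y ! r then colm m H r else zv m))" by simp
  fix i assume "i < length (lc m (Suc r) H y)"
  hence i: "i < m" by simp
  have "sg (lc m (Suc r) H y ! i) = (\<Prod>j<r. sg (H i j \<and> y ! j)) * sg (H i r \<and> y ! r)"
    unfolding lc_sg[OF i] by simp
  also have "\<dots> = sg (lc m r H y ! i) * sg ((if y ! r then colm m H r else zv m) ! i)"
    unfolding lc_sg[OF i] using i by (cases "y ! r") (simp_all add: colm_def)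
  also have "\<dots> = sg (bxor (lc m r H y) (if y ! r then colm m H r else zv m) ! i)"
    by (rule sg_bxor[symmetric]) (use i in auto)
  finally have "sg (lc m (Suc r) H y ! i) = sg (bxor (lc m r H y) (if y ! r then colm m H r else zv m) ! i)" .
  thus "lc m (Suc r) H y ! i = bxor (lc m r H y) (if y ! r then colm m H r else zv m) ! i" by (simp add: sg_eq)
qed

lemma lc_in: assumes X: "subsp m X" and cols: "\<forall>j<r. colm m H j \<in> X" shows "lc m r H y \<in> X"
  using cols
proof (induction r)
  case 0
  have "lc m 0 H y = zv m" by (simp add: lc_def zv_def list_eq_iff_nth_eq)
  thus ?case using X by (simp add: subsp_def)
next
  case (Suc r)
  hence a: "lc m r H y \<in> X" by simp
  have b: "(if y ! r then colm m H r else zv m) \<in> X" using Suc.prems X by (simp add: subsp_def)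
  show ?case unfolding lc_Suc using a b X by (simp add: subsp_def)
qed

definition Hs :: "(nat \<Rightarrow> nat \<Rightarrow> bool) \<Rightarrow> nat \<Rightarrow> nat \<Rightarrow> bool" where
  "Hs H = (\<lambda>i j. 0 < i \<and> H (i - 1) j)"

definition H2 :: "bool list \<Rightarrow> (nat \<Rightarrow> nat \<Rightarrow> bool) \<Rightarrow> nat \<Rightarrow> nat \<Rightarrow> bool" where
  "H2 h H = (\<lambda>i j. if j = 0 then h ! i else (0 < i \<and> H (i - 1) (j - 1)))"

lemma lc_Hs: "lc (Suc m) r (Hs H) y = False # lc m r H y"
proof (rule nth_equalityI)
  show "length (lc (Suc m) r (Hs H) y) = length (False # lc m r H y)" by simp
  fix i assume "i < length (lc (Suc m) r (Hs H) y)"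
  hence i: "i < Suc m" by simp
  show "lc (Suc m) r (Hs H) y ! i = (False # lc m r H y) ! i"
  proof (cases i)
    case 0 thus ?thesis by (simp add: lc_def Hs_def del: upt_Suc)
  next
    case (Suc i') thus ?thesis using i by (simp add: lc_def Hs_def nth_Cons del: upt_Suc)
  qed
qed

lemma colm_Hs: "colm (Suc m) (Hs H) j = False # colm m H j"
  by (auto simp: colm_def Hs_def list_eq_iff_nth_eq nth_Cons split: nat.splits simp del: upt_Suc)

lemma colm_H2_0: "length h = Suc m \<Longrightarrow> colm (Suc m) (H2 h H) 0 = h"
  by (auto simp: colm_def H2_def list_eq_iff_nth_eq simp del: upt_Suc)

lemma colm_H2_Suc: "colm (Suc m) (H2 h H) (Suc j) = False # colm m H j"
  by (auto simp: colm_def H2_def list_eq_iff_nth_eq nth_Cons split: nat.splits simp del: upt_Suc)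

lemma lc_H2: assumes h: "length h = Suc m"
  shows "lc (Suc m) (Suc r) (H2 h H) (p # y) = bxor (if p then h else zv (Suc m)) (False # lc m r H y)"
proof (rule nth_equalityI)
  show "length (lc (Suc m) (Suc r) (H2 h H) (p # y)) = length (bxor (if p then h else zv (Suc m)) (False # lc m r H y))"
    using h by simp
  fix i assume "i < length (lc (Suc m) (Suc r) (H2 h H) (p # y))"
  hence i: "i < Suc m" by simp
  have "sg (lc (Suc m) (Suc r) (H2 h H) (p # y) ! i) = sg (H2 h H i 0 \<and> p) * (\<Prod>j<r. sg (H2 h H i (Suc j) \<and> y ! j))"
    unfolding lc_sg[OF i] prod.lessThan_Suc_shift by simp
  also have "\<dots> = sg (bxor (if p then h else zv (Suc m)) (False # lc m r H y) ! i)"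
  proof (cases i)
    case 0 thus ?thesis using h by (simp add: H2_def)
  next
    case (Suc i')
    hence i': "i' < m" using i by simp
    have "(\<Prod>j<r. sg (H2 h H i (Suc j) \<and> y ! j)) = sg (lc m r H y ! i')"
      unfolding lc_sg[OF i'] using Suc by (simp add: H2_def)
    have "sg (bxor (if p then h else zv (Suc m)) (False # lc m r H y) ! i) = sg ((if p then h else zv (Suc m)) ! i) * sg ((False # lc m r H y) ! i)"
      using h i by (intro sg_bxor) auto
    also have "\<dots> = sg (H2 h H i 0 \<and> p) * sg (lc m r H y ! i')"
      using Suc h i by (cases p) (simp_all add: H2_def)
    finally show ?thesis using \<open>(\<Prod>j<r. sg (H2 h H i (Suc j) \<and> y ! j)) = sg (lc m r H y ! i')\<close> by simp
  qed
  finally show "lc (Suc m) (Suc r) (H2 h H) (p # y) ! i = bxor (if p then h else zv (Suc m)) (False # lc m r H y) ! i"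
    by (simp add: sg_eq)
qed

lemma cref_Hs: assumes "is_cref m r H piv" shows "is_cref (Suc m) r (Hs H) (map Suc piv)"
  using assms unfolding is_cref_def Hs_def
  by (auto simp: sorted_wrt_map less_Suc_eq_0_disj)

lemma cref_H2: assumes c: "is_cref m r H piv" and h: "length h = Suc m" "h ! 0"
  and hz: "\<forall>j<r. \<not> h ! Suc (piv ! j)"
  shows "is_cref (Suc m) (Suc r) (H2 h H) (0 # map Suc piv)"
proof -
  have l: "length piv = r" using c by (simp add: is_cref_def)
  have 1: "length (0 # map Suc piv) = Suc r" using l by simp
  have 2: "sorted_wrt (<) (0 # map Suc piv)" using c by (simp add: is_cref_def sorted_wrt_map)
  have 3: "\<forall>j<Suc r. (0 # map Suc piv) ! j < Suc m"
  proof (intro allI impI)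
    fix j assume j: "j < Suc r"
    show "(0 # map Suc piv) ! j < Suc m" using c j l by (cases j) (auto simp: is_cref_def)
  qed
  have 5: "\<forall>j<Suc r. \<forall>i<(0 # map Suc piv) ! j. \<not> H2 h H i j"
  proof (intro allI impI)
    fix j i assume j: "j < Suc r" and i: "i < (0 # map Suc piv) ! j"
    show "\<not> H2 h H i j"
    proof (cases j)
      case 0 thus ?thesis using i by simp
    next
      case (Suc j')
      hence j': "j' < r" using j by simp
      hence "i < Suc (piv ! j')" using i Suc l by simp
      thus ?thesis using c Suc l j' by (cases i) (auto simp: is_cref_def H2_def)
    qed
  qed
  have 4: "\<forall>j<Suc r. \<forall>k<Suc r. H2 h H ((0 # map Suc piv) ! j) k = (j = k)"
  proof (intro allI impI)
    fix j k assume j: "j < Suc r" and k: "k < Suc r"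
    show "H2 h H ((0 # map Suc piv) ! j) k = (j = k)"
    proof (cases j)
      case 0 thus ?thesis using h by (cases k) (auto simp: H2_def)
    next
      case (Suc j')
      hence j': "j' < r" using j by simp
      show ?thesis
      proof (cases k)
        case 0 thus ?thesis using Suc hz j' l by (simp add: H2_def)
      next
        case (Suc k')
        hence "k' < r" using k by simp
        thus ?thesis using c j' l Suc \<open>j = Suc j'\<close> by (simp add: H2_def is_cref_def)
      qed
    qed
  qed
  show ?thesis unfolding is_cref_def using 1 2 3 4 5 by blast
qed

lemma lc_piv: assumes c: "is_cref m r H piv" and j: "j < r"
  shows "lc m r H z ! (piv ! j) = z ! j"
proof -
  have pj: "piv ! j < m" using c j by (simp add: is_cref_def)
  have "{l. l < r \<and> H (piv ! j) l \<and> z ! l} = (if z ! j then {j} else {})"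
    using c j by (auto simp: is_cref_def)
  thus ?thesis using pj by (simp add: lc_def)
qed

lemma bxor_Cons[simp]: "bxor (x # a) (y # b) = (x \<noteq> y) # bxor a b" by (simp add: bxor_def)

lemma subsp_X0: assumes "subsp (Suc m) X" shows "subsp m {v. False # v \<in> X}"
proof -
  have "zv (Suc m) = False # zv m" by (simp add: zv_def)
  moreover have "False # bxor a b \<in> X" if "False # a \<in> X" "False # b \<in> X" for a b
  proof -
    have "bxor (False # a) (False # b) \<in> X" using assms that unfolding subsp_def by blast
    thus ?thesis by simp
  qed
  moreover have "{v. False # v \<in> X} \<subseteq> bvecs m" using assms unfolding subsp_def by auto
  ultimately show ?thesis using assms unfolding subsp_def by auto
qed

lemma echelon: "subsp m X \<Longrightarrow> \<exists>r H piv. is_cref m r H piv \<and> (\<forall>j<r. colm m H j \<in> X) \<and> (\<forall>a\<in>X. \<exists>y. length y = r \<and> a = lc m r H y)"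
proof (induction m arbitrary: X)
  case 0
  have "is_cref 0 0 (\<lambda>_ _. False) []" by (simp add: is_cref_def)
  moreover have "\<forall>a\<in>X. \<exists>y. length y = 0 \<and> a = lc 0 0 (\<lambda>_ _. False) y"
    using 0 by (auto simp: subsp_def lc_def)
  ultimately show ?case by blast
next
  case (Suc m)
  define X0 where "X0 = {v. False # v \<in> X}"
  have sX0: "subsp m X0" unfolding X0_def by (rule subsp_X0[OF Suc.prems])
  obtain r H piv where c: "is_cref m r H piv" and cols: "\<forall>j<r. colm m H j \<in> X0"
    and rep: "\<forall>a\<in>X0. \<exists>y. length y = r \<and> a = lc m r H y"
    using Suc.IH[OF sX0] by blast
  have lenX: "\<And>a. a \<in> X \<Longrightarrow> length a = Suc m" using Suc.prems by (auto simp: subsp_def)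
  have consX: "\<And>a. a \<in> X \<Longrightarrow> a = hd a # tl a" using lenX by (metis length_Suc_conv list.sel(1,3))
  show ?case
  proof (cases "\<exists>h\<in>X. h ! 0")
    case False
    have "is_cref (Suc m) r (Hs H) (map Suc piv)" by (rule cref_Hs[OF c])
    moreover have "\<forall>j<r. colm (Suc m) (Hs H) j \<in> X" using cols unfolding colm_Hs X0_def by simp
    moreover have "\<forall>a\<in>X. \<exists>y. length y = r \<and> a = lc (Suc m) r (Hs H) y"
    proof
      fix a assume a: "a \<in> X"
      have h0: "\<not> hd a" using False a consX by (metis nth_Cons_0)
      hence "tl a \<in> X0" unfolding X0_def using a consX by (metis (full_types) mem_Collect_eq)
      then obtain y where y: "length y = r" "tl a = lc m r H y" using rep by blast
      have "a = lc (Suc m) r (Hs H) y" unfolding lc_Hs using consX[OF a] h0 y by (metis (full_types))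
      thus "\<exists>y. length y = r \<and> a = lc (Suc m) r (Hs H) y" using y by blast
    qed
    ultimately show ?thesis by blast
  next
    case True
    then obtain h where h: "h \<in> X" "h ! 0" by blast
    have hl: "length h = Suc m" using lenX h by simp
    define z where "z = map (\<lambda>j. tl h ! (piv ! j)) [0..<r]"
    define hs where "hs = bxor h (False # lc m r H z)"
    have lz: "lc m r H z \<in> X0" by (rule lc_in[OF sX0 cols])
    hence "False # lc m r H z \<in> X" unfolding X0_def by simp
    hence hsX: "hs \<in> X" unfolding hs_def using h Suc.prems by (simp add: subsp_def)
    have hsl: "length hs = Suc m" unfolding hs_def using hl by simp
    have hs0: "hs ! 0" unfolding hs_def using h hl by simp
    have hsz: "\<forall>j<r. \<not> hs ! Suc (piv ! j)"
    proof (intro allI impI)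
      fix j assume j: "j < r"
      have pj: "piv ! j < m" using c j by (simp add: is_cref_def)
      have "hs ! Suc (piv ! j) = (h ! Suc (piv ! j) \<noteq> lc m r H z ! (piv ! j))"
        unfolding hs_def using hl pj by simp
      also have "lc m r H z ! (piv ! j) = z ! j" by (rule lc_piv[OF c j])
      also have "z ! j = tl h ! (piv ! j)" unfolding z_def using j by simp
      also have "tl h ! (piv ! j) = h ! Suc (piv ! j)" using hl by (cases h) auto
      finally show "\<not> hs ! Suc (piv ! j)" by simp
    qed
    have "is_cref (Suc m) (Suc r) (H2 hs H) (0 # map Suc piv)" by (rule cref_H2[OF c hsl hs0 hsz])
    moreover have "\<forall>j<Suc r. colm (Suc m) (H2 hs H) j \<in> X"
    proof (intro allI impI)
      fix j assume j: "j < Suc r"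
      show "colm (Suc m) (H2 hs H) j \<in> X"
      proof (cases j)
        case 0 thus ?thesis using colm_H2_0[OF hsl] hsX by simp
      next
        case (Suc j') thus ?thesis using colm_H2_Suc cols j unfolding X0_def by simp
      qed
    qed
    moreover have "\<forall>a\<in>X. \<exists>y. length y = Suc r \<and> a = lc (Suc m) (Suc r) (H2 hs H) y"
    proof
      fix a assume a: "a \<in> X"
      have al: "length a = Suc m" using lenX a by simp
      show "\<exists>y. length y = Suc r \<and> a = lc (Suc m) (Suc r) (H2 hs H) y"
      proof (cases "hd a")
        case False
        hence "tl a \<in> X0" unfolding X0_def using a consX by (metis (full_types) mem_Collect_eq)
        then obtain y where y: "length y = r" "tl a = lc m r H y" using rep by blast
        have "lc (Suc m) (Suc r) (H2 hs H) (False # y) = False # lc m r H y"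
          unfolding lc_H2[OF hsl] by (simp add: bxor_zv')
        hence "a = lc (Suc m) (Suc r) (H2 hs H) (False # y)" using consX[OF a] False y by simp
        thus ?thesis using y by (intro exI[of _ "False # y"]) simp
      next
        case True
        define d where "d = bxor a hs"
        have dX: "d \<in> X" unfolding d_def using a hsX Suc.prems by (simp add: subsp_def)
        have dl: "length d = Suc m" unfolding d_def using al hsl by simp
        have "hd d = False" unfolding d_def using True hs0 al hsl
          by (cases a; cases hs) auto
        hence "tl d \<in> X0" unfolding X0_def using dX consX by (metis (full_types) mem_Collect_eq)
        then obtain y where y: "length y = r" "tl d = lc m r H y" using rep by blast
        have dd: "d = False # lc m r H y" using consX[OF dX] \<open>hd d = False\<close> y by simp
        have "a = bxor hs d" unfolding d_def using al hsl bxor_comm[of hs "bxor a hs"] bxor_cancel[of a hs] by simp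
        also have "\<dots> = lc (Suc m) (Suc r) (H2 hs H) (True # y)" unfolding lc_H2[OF hsl] dd by simp
        finally show ?thesis using y by (intro exI[of _ "True # y"]) simp
      qed
    qed
    ultimately show ?thesis by blast
  qed
qed


context crf begin

lemma colv_colm: "colv j = colm m H j" by (simp add: colv_def colm_def)

lemma Pmul_lc: assumes y: "length y = r" shows "Pmul m r H piv (y @ zv (m - r)) = lc m r H y"
proof (rule nth_equalityI)
  show "length (Pmul m r H piv (y @ zv (m - r))) = length (lc m r H y)" by simp
  fix i assume "i < length (Pmul m r H piv (y @ zv (m - r)))"
  hence i: "i < m" by simp
  have a: "{j. j < r \<and> H i j \<and> (y @ zv (m - r)) ! j} = {j. j < r \<and> H i j \<and> y ! j}"
    using y by (auto simp: nth_append)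
  have b: "{k. k < m - r \<and> nonpiv m piv ! k = i \<and> (y @ zv (m - r)) ! (r + k)} = {}"
    using y by (auto simp: nth_append)
  show "Pmul m r H piv (y @ zv (m - r)) ! i = lc m r H y ! i"
    unfolding Pmul_nth[OF i] a b using i by (simp add: lc_def)
qed

lemma Pmul_app_xor: assumes y: "length y = r" "length y' = r" and c: "length c = m - r"
  shows "bxor (Pmul m r H piv (y @ c)) (Pmul m r H piv (y' @ zv (m - r))) = Pmul m r H piv (bxor y y' @ c)"
proof -
  have "bxor (y @ c) (y' @ zv (m - r)) = bxor y y' @ c"
    using y c by (auto simp: list_eq_iff_nth_eq nth_append)
  moreover have "length (y @ c) = m" "length (y' @ zv (m - r)) = m" using y c piv_props(4) by auto
  ultimately show ?thesis using Pmul_xor by metis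
qed

end


locale pL = crf +
  fixes S0 :: "cmat set" and \<psi> :: "bool list \<Rightarrow> complex" and kj :: "nat \<Rightarrow> nat"
    and \<beta>j :: "nat \<Rightarrow> bool list" and c :: "bool list"
  assumes S0: "stabilizer_group m S0"
    and fixS0: "\<And>E. E \<in> S0 \<Longrightarrow> mapply m E \<psi> = \<psi>"
    and Ej: "\<And>j. j < r \<Longrightarrow> hw m (kj j) (colv j) (\<beta>j j) \<in> S0 \<and> length (\<beta>j j) = m"
    and cl: "length c = m - r"
begin

lemma rmm: "r \<le> m" using piv_props by simp

definition g :: "bool list \<Rightarrow> complex" where "g y = \<psi> (Pmul m r H piv (y @ c))"
definition A :: "nat \<Rightarrow> nat \<Rightarrow> bool" where "A j l = Gam (\<beta>j j) ! l"
definition \<sigma> :: "nat \<Rightarrow> complex" where "\<sigma> j = (\<Prod>k<m - r. sg (Gam (\<beta>j j) ! (r + k) \<and> c ! k))"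
definition \<mu> :: "nat \<Rightarrow> complex" where "\<mu> j = \<i> ^ kj j * \<sigma> j"

lemma split_dn_app: assumes y: "length y = r" and gl: "length \<gamma> = m"
  shows "(-1::complex) ^ dn m \<gamma> (y @ c) = (\<Prod>l<r. sg (\<gamma> ! l \<and> y ! l)) * (\<Prod>k<m - r. sg (\<gamma> ! (r + k) \<and> c ! k))"
proof -
  have "(-1::complex) ^ dn m \<gamma> (y @ c) = (\<Prod>i<r + (m - r). sg (\<gamma> ! i \<and> (y @ c) ! i))"
    unfolding dn_sg using rmm by simp
  also have "\<dots> = (\<Prod>l<r. sg (\<gamma> ! l \<and> (y @ c) ! l)) * (\<Prod>k<m - r. sg (\<gamma> ! (r + k) \<and> (y @ c) ! (r + k)))"
    by (rule prod_split_nat)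
  also have "\<dots> = (\<Prod>l<r. sg (\<gamma> ! l \<and> y ! l)) * (\<Prod>k<m - r. sg (\<gamma> ! (r + k) \<and> c ! k))"
    using y by (simp add: nth_append)
  finally show ?thesis .
qed

lemma rel: assumes j: "j < r" and y: "length y = r" and yj: "\<not> y ! j"
  shows "g y = \<mu> j * (\<Prod>l<r. sg (A j l \<and> y[j := True] ! l)) * g (y[j := True])"
proof -
  define v where "v = Pmul m r H piv (y @ c)"
  have vl: "length v = m" unfolding v_def by simp
  have ycl: "length (y @ c) = m" using y cl rmm by simp
  have upd: "(y @ c)[j := \<not> (y @ c) ! j] = y[j := True] @ c" using y j yj by (simp add: list_update_append nth_append)
  have vx: "bxor v (colv j) = Pmul m r H piv (y[j := True] @ c)"
    unfolding v_def using Pmul_flip[OF j ycl] upd by simp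
  obtain E where E: "E = hw m (kj j) (colv j) (\<beta>j j)" "E \<in> S0" "length (\<beta>j j) = m" using Ej[OF j] by blast
  have "g y = \<psi> v" unfolding g_def v_def ..
  also have "\<dots> = mapply m E \<psi> v" using fixS0[OF E(2)] by simp
  also have "\<dots> = \<i> ^ kj j * (-1) ^ dn m (\<beta>j j) (Pmul m r H piv (y[j := True] @ c)) * \<psi> (Pmul m r H piv (y[j := True] @ c))"
    unfolding E(1) mapply_hw[OF vl colv_len] vx ..
  also have "(-1::complex) ^ dn m (\<beta>j j) (Pmul m r H piv (y[j := True] @ c)) = (-1) ^ dn m (Gam (\<beta>j j)) (y[j := True] @ c)"
    by (rule Gam_dot) (use E(3) y cl rmm in auto)
  also have "\<dots> = (\<Prod>l<r. sg (A j l \<and> y[j := True] ! l)) * \<sigma> j"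
    using split_dn_app[of "y[j := True]" "Gam (\<beta>j j)"] y unfolding A_def \<sigma>_def by simp
  finally show ?thesis unfolding g_def \<mu>_def by (simp add: ac_simps)
qed

lemma A_sym: assumes j: "j < r" and l: "l < r" shows "A j l = A l j"
proof -
  obtain Ejj where Ejd: "Ejj = hw m (kj j) (colv j) (\<beta>j j)" "Ejj \<in> S0" "length (\<beta>j j) = m" using Ej[OF j] by blast
  obtain Ell where Eld: "Ell = hw m (kj l) (colv l) (\<beta>j l)" "Ell \<in> S0" "length (\<beta>j l) = m" using Ej[OF l] by blast
  have "mmul m Ejj Ell = mmul m Ell Ejj" using S0 Ejd(2) Eld(2) by (simp add: stabilizer_group_def)
  hence "(\<lambda>u v. (\<i> ^ (kj j + kj l) * (-1) ^ dn m (\<beta>j j) (colv l)) * Dmat m (bxor (colv j) (colv l)) (bxor (\<beta>j j) (\<beta>j l)) u v)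
       = (\<lambda>u v. (\<i> ^ (kj l + kj j) * (-1) ^ dn m (\<beta>j l) (colv j)) * Dmat m (bxor (colv l) (colv j)) (bxor (\<beta>j l) (\<beta>j j)) u v)"
    unfolding Ejd(1) Eld(1) mmul_hw[OF colv_len Ejd(3) colv_len Eld(3)] mmul_hw[OF colv_len Eld(3) colv_len Ejd(3)] .
  hence eq: "\<And>u v. (\<i> ^ (kj j + kj l) * (-1) ^ dn m (\<beta>j j) (colv l)) * Dmat m (bxor (colv j) (colv l)) (bxor (\<beta>j j) (\<beta>j l)) u v
       = (\<i> ^ (kj j + kj l) * (-1) ^ dn m (\<beta>j l) (colv j)) * Dmat m (bxor (colv j) (colv l)) (bxor (\<beta>j j) (\<beta>j l)) u v"
    by (metis add.commute bxor_comm)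
  have "\<i> ^ (kj j + kj l) * (-1::complex) ^ dn m (\<beta>j j) (colv l) = \<i> ^ (kj j + kj l) * (-1) ^ dn m (\<beta>j l) (colv j)"
    using Dmat_inj[OF _ _ _ _ _ eq] Ejd(3) Eld(3) by simp
  hence "(-1::complex) ^ dn m (\<beta>j j) (colv l) = (-1) ^ dn m (\<beta>j l) (colv j)" by simp
  hence "even (dn m (\<beta>j j) (colv l)) = even (dn m (\<beta>j l) (colv j))"
    by (auto simp: minus_one_power_iff split: if_splits)
  thus ?thesis unfolding A_def Gam_def using j l rmm by simp
qed


definition e :: "nat \<Rightarrow> nat" where "e j = (\<Sum>k<m - r. of_bool (Gam (\<beta>j j) ! (r + k) \<and> c ! k))"
definition qn :: "nat \<Rightarrow> nat" where
  "qn n = (SOME q. q < 4 \<and> (kj n + 2 * e n + 2 * of_bool (A n n) + q) mod 4 = 0)"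
definition Sm :: "nat \<Rightarrow> nat \<Rightarrow> bool" where "Sm j k = (if j = k then odd (qn j) else A j k)"
definition bt :: "bool list" where "bt = map (\<lambda>n. 2 \<le> qn n) [0..<r]"
definition T :: "bool list \<Rightarrow> complex" where "T y = \<i> ^ qfn r Sm y * (-1) ^ dn r bt y"

lemma bt_len[simp]: "length bt = r" by (simp add: bt_def)

lemma Sm_sym: "sym_bin r Sm" unfolding sym_bin_def Sm_def using A_sym by auto

lemma sg_sq: "sg p * sg p = 1" by (simp add: sg_def)

lemma qn_props: "qn n < 4 \<and> (kj n + 2 * e n + 2 * of_bool (A n n) + qn n) mod 4 = 0"
  unfolding qn_def by (rule someI_ex, rule ex_inv4)

lemma sigma_e: "\<sigma> j = (-1) ^ e j"
  unfolding \<sigma>_def e_def sgn_sum sg_def ..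

lemma mu_q: "\<mu> n * sg (A n n) * \<i> ^ qn n = 1"
proof -
  have "\<mu> n * sg (A n n) * \<i> ^ qn n = \<i> ^ (kj n + 2 * e n + 2 * of_bool (A n n) + qn n)"
    unfolding \<mu>_def sigma_e power_add power_mult by (cases "A n n") (simp_all add: sg_def)
  also have "\<dots> = \<i> ^ ((kj n + 2 * e n + 2 * of_bool (A n n) + qn n) mod 4)" by (rule i_pow_mod4)
  also have "\<dots> = 1" using qn_props by simp
  finally show ?thesis .
qed

lemma mu_nz: "\<mu> n \<noteq> 0" unfolding \<mu>_def sigma_e by simp

lemma iq: assumes "q < 4" shows "\<i> ^ (of_bool (odd q)) * sg (2 \<le> q) = \<i> ^ q"
proof -
  have "q = 0 \<or> q = 1 \<or> q = 2 \<or> q = 3" using assms by auto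
  moreover have "\<i> ^ 3 = - \<i>" by (simp add: power3_eq_cube)
  ultimately show ?thesis by (elim disjE) (simp_all add: sg_def)
qed

lemma qfn_ev: "n < r \<Longrightarrow> qfn r Sm (ev r n) = of_bool (Sm n n)"
proof -
  assume n: "n < r"
  have "qfn r Sm (ev r n) = (\<Sum>j<r. if j = n then (\<Sum>k<r. if k = n then of_bool (Sm n n) else 0) else 0)"
    unfolding qfn_def by (intro sum.cong refl) auto
  thus ?thesis using n by (simp add: sum.delta)
qed

lemma T_step: assumes n: "n < r" and y: "length y = r" and yn: "\<not> y ! n"
  shows "T y = \<mu> n * (\<Prod>l<r. sg (A n l \<and> y[n := True] ! l)) * T (y[n := True])"
proof -
  define P0 where "P0 = (\<Prod>l<r. sg (A n l \<and> y ! l))"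
  have yx: "y[n := True] = bxor y (ev r n)" using y n yn by (auto simp: list_eq_iff_nth_eq nth_list_update)
  have P': "(\<Prod>l<r. sg (A n l \<and> y[n := True] ! l)) = P0 * sg (A n n)"
  proof -
    have "(\<Prod>l<r. sg (A n l \<and> y[n := True] ! l)) = (\<Prod>l<r. sg (A n l \<and> y ! l) * (if l = n then sg (A n n) else 1))"
      using y yn by (intro prod.cong refl) (auto simp: nth_list_update)
    thus ?thesis unfolding prod.distrib P0_def using n by (simp add: prod.delta)
  qed
  have B: "(-1::complex) ^ Bn r Sm y (ev r n) = P0"
  proof -
    have "(-1::complex) ^ Bn r Sm y (ev r n) = (\<Prod>j<r. sg (y ! j \<and> odd (\<Sum>k<r. of_bool (Sm j k \<and> ev r n ! k) :: nat)))"
      by (rule Bn_sg)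
    also have "\<dots> = P0" unfolding P0_def
    proof (intro prod.cong refl)
      fix j assume "j \<in> {..<r}"
      hence j: "j < r" by simp
      have "(\<Sum>k<r. of_bool (Sm j k \<and> ev r n ! k) :: nat) = (\<Sum>k<r. if k = n then of_bool (Sm j n) else 0)"
        by (intro sum.cong refl) auto
      also have "\<dots> = of_bool (Sm j n)" using n by (simp add: sum.delta)
      finally have "(\<Sum>k<r. of_bool (Sm j k \<and> ev r n ! k) :: nat) = of_bool (Sm j n)" .
      moreover have "y ! j \<Longrightarrow> Sm j n = A n j" using yn A_sym[OF j n] unfolding Sm_def by auto
      ultimately show "sg (y ! j \<and> odd (\<Sum>k<r. of_bool (Sm j k \<and> ev r n ! k) :: nat)) = sg (A n j \<and> y ! j)"
        by (cases "y ! j") auto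
    qed
    finally show ?thesis .
  qed
  have Ty': "T (y[n := True]) = T y * \<i> ^ qn n * P0"
  proof -
    have "\<i> ^ qfn r Sm (y[n := True]) = \<i> ^ qfn r Sm y * \<i> ^ qfn r Sm (ev r n) * (-1) ^ Bn r Sm y (ev r n)"
      unfolding yx by (rule i_qfn_xor[OF Sm_sym]) (use y in auto)
    moreover have "(-1::complex) ^ dn r bt (y[n := True]) = (-1) ^ dn r bt y * (-1) ^ dn r bt (ev r n)"
      unfolding yx by (rule dn_xor2) (use y in auto)
    moreover have "(-1::complex) ^ dn r bt (ev r n) = sg (2 \<le> qn n)"
      using n by (simp add: dn_ev bt_def sg_def)
    moreover have "\<i> ^ qfn r Sm (ev r n) = \<i> ^ (of_bool (odd (qn n)))"
      using n by (simp add: qfn_ev Sm_def)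
    ultimately have "T (y[n := True]) = T y * (\<i> ^ (of_bool (odd (qn n))) * sg (2 \<le> qn n)) * P0"
      unfolding T_def B by (simp add: ac_simps)
    thus ?thesis using iq qn_props by simp
  qed
  have P00: "P0 * P0 = 1" unfolding P0_def prod.distrib[symmetric] by (simp add: sg_sq)
  have "\<mu> n * (\<Prod>l<r. sg (A n l \<and> y[n := True] ! l)) * T (y[n := True]) = T y * (\<mu> n * sg (A n n) * \<i> ^ qn n) * (P0 * P0)"
    unfolding P' Ty' by (simp add: ac_simps)
  also have "\<dots> = T y" unfolding mu_q P00 by simp
  finally show ?thesis by simp
qed

lemma T_zero: "T (zv r) = 1"
  unfolding T_def qfn_def by (simp add: dn_def)

lemma g_formula: assumes y: "length y = r" shows "g y = g (zv r) * T y"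
proof -
  have "\<forall>y. length y = r \<and> (\<forall>l. n \<le> l \<and> l < r \<longrightarrow> \<not> y ! l) \<longrightarrow> g y = g (zv r) * T y" for n
  proof (induction n)
    case 0
    show ?case
    proof (intro allI impI)
      fix y assume h: "length y = r \<and> (\<forall>l. 0 \<le> l \<and> l < r \<longrightarrow> \<not> y ! l)"
      hence "y = zv r" by (auto simp: list_eq_iff_nth_eq)
      thus "g y = g (zv r) * T y" using T_zero by simp
    qed
  next
    case (Suc n)
    show ?case
    proof (intro allI impI)
      fix y assume h: "length y = r \<and> (\<forall>l. Suc n \<le> l \<and> l < r \<longrightarrow> \<not> y ! l)"
      show "g y = g (zv r) * T y"
      proof (cases "n < r \<and> y ! n")
        case False
        hence "\<forall>l. n \<le> l \<and> l < r \<longrightarrow> \<not> y ! l" using h by (metis le_eq_less_or_eq Suc_leI)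
        thus ?thesis using Suc.IH h by blast
      next
        case True
        define y0 where "y0 = y[n := False]"
        have y0l: "length y0 = r" unfolding y0_def using h by simp
        have y0z: "\<forall>l. n \<le> l \<and> l < r \<longrightarrow> \<not> y0 ! l" unfolding y0_def using h
          by (auto simp: nth_list_update)
        have y0n: "\<not> y0 ! n" unfolding y0_def using True h by simp
        have yy: "y0[n := True] = y" unfolding y0_def using True h by (auto simp: list_eq_iff_nth_eq nth_list_update)
        have IH: "g y0 = g (zv r) * T y0" using Suc.IH y0l y0z by blast
        have r1: "g y0 = \<mu> n * (\<Prod>l<r. sg (A n l \<and> y ! l)) * g y"
          using rel[OF _ y0l y0n] True yy by simp
        have r2: "T y0 = \<mu> n * (\<Prod>l<r. sg (A n l \<and> y ! l)) * T y"
          using T_step[OF _ y0l y0n] True yy by simp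
        have nz: "\<mu> n * (\<Prod>l<r. sg (A n l \<and> y ! l)) \<noteq> 0" using mu_nz by (simp add: sg_def)
        have "\<mu> n * (\<Prod>l<r. sg (A n l \<and> y ! l)) * g y = \<mu> n * (\<Prod>l<r. sg (A n l \<and> y ! l)) * (g (zv r) * T y)"
          using IH r1 r2 by simp
        thus ?thesis using nz by simp
      qed
    qed
  qed
  note HH = this
  have "\<forall>l. r \<le> l \<and> l < r \<longrightarrow> \<not> y ! l" by auto
  thus ?thesis using HH[of r] y by blast
qed

end


lemma part1: assumes c: "is_cref m r H piv" and s: "sym_bin r S" and b: "b \<in> bvecs m"
  shows "stabilizer_state m (bssc m r H piv S b)"
proof -
  interpret bsL m r H piv S b by unfold_locales (use c s b in auto)
  show ?thesis by (rule bssc_stabilizer_state)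
qed

lemma cnorm2_scal: "cnorm2 m (\<lambda>a. c * \<psi> a) = (cmod c)\<^sup>2 * cnorm2 m \<psi>"
  unfolding cnorm2_def by (simp add: norm_mult power_mult_distrib sum_distrib_left)

lemma part2: assumes st: "stabilizer_state m \<psi>"
  shows "\<exists>r H piv S b c. r \<le> m \<and> is_cref m r H piv \<and> sym_bin r S \<and> b \<in> bvecs m \<and>
               cmod c = 1 \<and> \<psi> = (\<lambda>a. c * bssc m r H piv S b a)"
proof -
  obtain S0 where max: "maximal_stabilizer_group m S0" and psic: "\<psi> \<in> cvecs m" and n1: "cnorm2 m \<psi> = 1"
    and fs: "fixed_space m S0 = {(\<lambda>a. c * \<psi> a) | c. True}"
    using st unfolding stabilizer_state_def by blast
  have G: "stabilizer_group m S0" using max by (simp add: maximal_stabilizer_group_def)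
  have SH: "S0 \<subseteq> HW m" using G by (simp add: stabilizer_group_def)
  have "\<psi> \<in> fixed_space m S0" unfolding fs by (rule CollectI, rule exI[of _ 1]) simp
  hence fixS0: "\<And>E. E \<in> S0 \<Longrightarrow> mapply m E \<psi> = \<psi>" unfolding fixed_space_def by blast
  define X where "X = {a. \<exists>k b. hw m k a b \<in> S0 \<and> length a = m \<and> length b = m}"
  have sX: "subsp m X"
  proof -
    have "X \<subseteq> bvecs m" unfolding X_def by auto
    moreover have "zv m \<in> X"
    proof -
      have "hw m 0 (zv m) (zv m) \<in> S0" using G mid_hw[of m] by (simp add: stabilizer_group_def)
      thus ?thesis unfolding X_def by (intro CollectI exI[of _ 0] exI[of _ "zv m"]) simp
    qed
    moreover have "bxor a a' \<in> X" if a: "a \<in> X" and a': "a' \<in> X" for a a'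
    proof -
      obtain k b where kb: "hw m k a b \<in> S0" "length a = m" "length b = m" using a unfolding X_def by blast
      obtain k' b' where kb': "hw m k' a' b' \<in> S0" "length a' = m" "length b' = m" using a' unfolding X_def by blast
      have "mmul m (hw m k a b) (hw m k' a' b') \<in> S0" using G kb kb' by (simp add: stabilizer_group_def)
      hence "hw m ((k + k' + 2 * dn m b a') mod 4) (bxor a a') (bxor b b') \<in> S0"
        unfolding mmul_hw_HW[OF kb(2,3) kb'(2,3)] .
      thus ?thesis unfolding X_def using kb kb' by (intro CollectI exI[of _ "(k + k' + 2 * dn m b a') mod 4"] exI[of _ "bxor b b'"]) simp
    qed
    ultimately show ?thesis unfolding subsp_def by blast
  qed
  obtain r H piv where c: "is_cref m r H piv" and cols: "\<forall>j<r. colm m H j \<in> X"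
    and rep: "\<forall>a\<in>X. \<exists>y. length y = r \<and> a = lc m r H y"
    using echelon[OF sX] by blast
  interpret crf m r H piv by unfold_locales (rule c)
  have rmm: "r \<le> m" using piv_props by simp
  have "\<forall>j. \<exists>p. j < r \<longrightarrow> hw m (fst p) (colv j) (snd p) \<in> S0 \<and> length (snd p) = m"
  proof
    fix j
    show "\<exists>p. j < r \<longrightarrow> hw m (fst p) (colv j) (snd p) \<in> S0 \<and> length (snd p) = m"
    proof (cases "j < r")
      case True
      hence "colv j \<in> X" using cols colv_colm by simp
      then obtain k b where "hw m k (colv j) b \<in> S0" "length b = m" unfolding X_def by blast
      thus ?thesis by (intro exI[of _ "(k, b)"]) simp
    qed simp
  qed
  then obtain f where f: "\<And>j. j < r \<Longrightarrow> hw m (fst (f j)) (colv j) (snd (f j)) \<in> S0 \<and> length (snd (f j)) = m"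
    using choice[of "\<lambda>j p. j < r \<longrightarrow> hw m (fst p) (colv j) (snd p) \<in> S0 \<and> length (snd p) = m"] by blast
  have "\<psi> \<noteq> (\<lambda>_. 0)" using n1 unfolding cnorm2_def by auto
  then obtain u0 where u0: "\<psi> u0 \<noteq> 0" by auto
  have u0l: "length u0 = m" using u0 psic unfolding cvecs_def by auto
  define cc where "cc = drop r (Pinv m r H piv u0)"
  define y0 where "y0 = take r (Pinv m r H piv u0)"
  have pl: "length (Pinv m r H piv u0) = m" using Pinv_len u0l by simp
  have ccl: "length cc = m - r" unfolding cc_def using pl by simp
  have y0l: "length y0 = r" unfolding y0_def using pl rmm by simp
  have u0e: "u0 = Pmul m r H piv (y0 @ cc)" unfolding y0_def cc_def using Pmul_Pinv u0l by simp
  interpret pL m r H piv S0 \<psi> "\<lambda>j. fst (f j)" "\<lambda>j. snd (f j)" cc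
    by unfold_locales (use G fixS0 f ccl in auto)
  have g0: "g (zv r) \<noteq> 0"
  proof
    assume "g (zv r) = 0"
    hence "g y0 = 0" using g_formula[OF y0l] by simp
    thus False using u0 u0e unfolding g_def by simp
  qed
  have btc: "length (bt @ cc) = m" using ccl rmm by simp
  interpret bsL m r H piv Sm "bt @ cc" by unfold_locales (use Sm_sym btc in auto)
  define \<kappa> where "\<kappa> = c0 * (\<Prod>k<m - r. sg (cc ! k \<and> cc ! k))"
  have knz: "\<kappa> \<noteq> 0" unfolding \<kappa>_def c0_def by (simp add: sg_def)
  have wC: "w (Pmul m r H piv (y @ cc)) = \<kappa> * T y" if y: "length y = r" for y
  proof -
    have yl: "length (y @ cc) = m" using y ccl rmm by simp
    have q: "qfn r Sm (y @ cc) = qfn r Sm y" unfolding qfn_def using y by (simp add: nth_append)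
    have d: "(-1::complex) ^ dn m (bt @ cc) (y @ cc) = (-1) ^ dn r bt y * (\<Prod>k<m - r. sg (cc ! k \<and> cc ! k))"
    proof -
      have "(-1::complex) ^ dn m (bt @ cc) (y @ cc) = (\<Prod>i<r + (m - r). sg ((bt @ cc) ! i \<and> (y @ cc) ! i))"
        unfolding dn_sg using rmm by simp
      also have "\<dots> = (\<Prod>l<r. sg ((bt @ cc) ! l \<and> (y @ cc) ! l)) * (\<Prod>k<m - r. sg ((bt @ cc) ! (r + k) \<and> (y @ cc) ! (r + k)))"
        by (rule prod_split_nat)
      also have "\<dots> = (-1) ^ dn r bt y * (\<Prod>k<m - r. sg (cc ! k \<and> cc ! k))"
        unfolding dn_sg using y by (simp add: nth_append)
      finally show ?thesis .
    qed
    have s: "supp (y @ cc)" unfolding supp_def using y rmm by (auto simp: nth_append)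
    show ?thesis unfolding w_Pmul[OF yl] W_def q d T_def \<kappa>_def using s by (simp add: ac_simps)
  qed
  define inC where "inC v \<longleftrightarrow> (\<exists>y. length y = r \<and> v = Pmul m r H piv (y @ cc))" for v
  define lam where "lam = g (zv r) / \<kappa>"
  have lnz: "lam \<noteq> 0" unfolding lam_def using g0 knz by simp
  have wpsi: "w v = \<psi> v / lam" if hC: "inC v" for v
  proof -
    obtain y where y: "length y = r" "v = Pmul m r H piv (y @ cc)" using hC unfolding inC_def by blast
    have e1: "\<psi> v = g (zv r) * T y" using g_formula[OF y(1)] y(2) unfolding g_def by simp
    have e2: "w v = \<kappa> * T y" using wC[OF y(1)] y(2) by simp
    show ?thesis unfolding e1 e2 lam_def using g0 knz by simp
  qed
  have woff: "w v = 0" if vl: "length v = m" and nC: "\<not> inC v" for v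
  proof -
    define u where "u = Pinv m r H piv v"
    have ul: "length u = m" unfolding u_def using Pinv_len vl by simp
    have vu: "v = Pmul m r H piv u" unfolding u_def using Pmul_Pinv vl by simp
    have "\<not> supp u"
    proof
      assume su: "supp u"
      have "drop r u = cc"
      proof (rule nth_equalityI)
        show "length (drop r u) = length cc" using ul ccl by simp
        fix k assume "k < length (drop r u)"
        hence k: "r + k < m" "r + k \<ge> r" using ul by auto
        hence "(bt @ cc) ! (r + k) = u ! (r + k)" using su unfolding supp_def by simp
        moreover have "(bt @ cc) ! (r + k) = cc ! k" by (simp add: nth_append)
        ultimately show "drop r u ! k = cc ! k" using ul k by simp
      qed
      hence "u = take r u @ cc" by (metis append_take_drop_id)
      hence "inC v" unfolding inC_def using vu ul rmm by (intro exI[of _ "take r u"]) auto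
      thus False using nC by simp
    qed
    thus ?thesis using w_Pmul[OF ul] vu unfolding W_def by simp
  qed
  have wfix: "mapply m E w = w" if E: "E \<in> S0" for E
  proof (rule ext)
    fix v
    obtain k a b where Ed: "E = hw m k a b" "length a = m" "length b = m" using E SH HW_alt by blast
    have "a \<in> X" unfolding X_def using E Ed by blast
    then obtain ya where ya: "length ya = r" "a = lc m r H ya" using rep by blast
    have aP: "a = Pmul m r H piv (ya @ zv (m - r))" using Pmul_lc[OF ya(1)] ya(2) by simp
    show "mapply m E w v = w v"
    proof (cases "length v = m")
      case False thus ?thesis unfolding Ed(1) using mapply_hw0 w_off by simp
    next
      case vl: True
      have mp: "mapply m E w v = \<i> ^ k * (-1) ^ dn m b (bxor v a) * w (bxor v a)"
        unfolding Ed(1) by (rule mapply_hw[OF vl Ed(2)])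
      have mpsi: "\<psi> v = \<i> ^ k * (-1) ^ dn m b (bxor v a) * \<psi> (bxor v a)"
        using fixS0[OF E] mapply_hw[OF vl Ed(2), of k b \<psi>] Ed(1) by simp
      show ?thesis
      proof (cases "inC v")
        case True
        then obtain y where y: "length y = r" "v = Pmul m r H piv (y @ cc)" unfolding inC_def by blast
        have "bxor v a = Pmul m r H piv (bxor y ya @ cc)" unfolding y(2) aP by (rule Pmul_app_xor[OF y(1) ya(1) ccl])
        hence "inC (bxor v a)" unfolding inC_def using y ya by (intro exI[of _ "bxor y ya"]) simp
        hence "w (bxor v a) = \<psi> (bxor v a) / lam" by (rule wpsi)
        hence "mapply m E w v = \<psi> v / lam" unfolding mp mpsi by simp
        thus ?thesis using wpsi[OF True] by simp
      next
        case False
        have "\<not> inC (bxor v a)"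
        proof
          assume "inC (bxor v a)"
          then obtain y where y: "length y = r" "bxor v a = Pmul m r H piv (y @ cc)" unfolding inC_def by blast
          have "v = bxor (bxor v a) a" using vl Ed(2) by (simp add: bxor_cancel)
          also have "\<dots> = bxor (Pmul m r H piv (y @ cc)) (Pmul m r H piv (ya @ zv (m - r)))" using y(2) aP by simp
          also have "\<dots> = Pmul m r H piv (bxor y ya @ cc)" by (rule Pmul_app_xor[OF y(1) ya(1) ccl])
          finally have "inC v" unfolding inC_def using y ya by (intro exI[of _ "bxor y ya"]) simp
          thus False using False by simp
        qed
        hence "w (bxor v a) = 0" using woff vl Ed(2) by simp
        thus ?thesis unfolding mp using woff[OF vl False] by simp
      qed
    qed
  qed
  have "w \<in> fixed_space m S0" unfolding fixed_space_def using w_cvecs wfix by simp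
  then obtain c' where c': "w = (\<lambda>a. c' * \<psi> a)" unfolding fs by blast
  have "1 = (cmod c')\<^sup>2" using cnorm2_w cnorm2_scal[of m c' \<psi>] n1 c' by simp
  hence "cmod c' = 1 \<or> cmod c' = - 1" by (simp add: power2_eq_1_iff)
  hence cm: "cmod c' = 1" using norm_ge_zero[of c'] by linarith
  hence c'nz: "c' \<noteq> 0" by auto
  have "\<psi> = (\<lambda>a. (1 / c') * w a)" using c' c'nz by (auto intro!: ext)
  moreover have "cmod (1 / c') = 1" using cm by (simp add: norm_divide)
  moreover have "bt @ cc \<in> bvecs m" using btc by simp
  ultimately show ?thesis using rmm c Sm_sym unfolding w_def by blast
qed

theorem corollary2:
  fixes m :: nat
  assumes "m \<ge> 1"
  shows "(\<forall>r H piv S b. r \<le> m \<and> is_cref m r H piv \<and> sym_bin r S \<and> b \<in> bvecs m \<longrightarrow>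
            stabilizer_state m (bssc m r H piv S b))
       \<and> (\<forall>\<psi>. stabilizer_state m \<psi> \<longrightarrow>
            (\<exists>r H piv S b c. r \<le> m \<and> is_cref m r H piv \<and> sym_bin r S \<and> b \<in> bvecs m \<and>
               cmod c = 1 \<and> \<psi> = (\<lambda>a. c * bssc m r H piv S b a)))"
  using part1 part2 by blast


end
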